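(* Let $(K,\mathscr T)$ be a stable compact stable topological space and $M$ a stable subset of $\mathscr C(K,L^0)$. Then $M$ is stable totally bounded with respect to the stable metric $d_\infty(f,g)=\max\{|f(x)-g(x)|:x\in K\}$ if and only if (i) for each $x\in K$ the set $M_x=\{f(x):f\in M\}$ is bounded, i.e. there is $r_x\in L^0$ with $|f(x)|\le r_x$ for all $f\in M$; and (ii) $M$ is stable equicontinuous.
   Context: $L^0$: real measurable functions on a probability space modulo a.e. equality, a.e. order, $L^0_{++}=\{r>0\text{ a.e.}\}$; $L^0$ carries the topology with base $\{s:|s-t|<r\}$, $t\in L^0$, $r\in L^0_{++}$. An $L^0$-module is stable if for each countable measurable partition $(A_k)$ and $(x_k)$ there is a unique $x=\sum_k1_{A_k}x_k$ with $1_{A_k}x=1_{A_k}x_k$; nonempty subsets closed under concatenation are stable; for stable $Y_k$, $\sum_k1_{A_k}Y_k=\{\sum_k1_{A_k}y_k:y_k\in Y_k\}$; a nonempty collection of stable sets is stable if closed under this operation; a map $f$ is stable if $f(\sum_k1_{A_k}x_k)=\sum_k1_{A_k}f(x_k)$. A stable topological space is a stable subset $K$ of a stable $L^0$-module with a topology having a base which is a stable collection of stable sets; it is stable compact if every stable filter (a filter with a filter base which is a stable collection of stable sets) has a cluster point in $K$. $\mathscr C(K,L^0)$ is the stable $L^0$-module of stable continuous $f:K\to L^0$; for stable compact $K$ the maximum in $d_\infty$ is attained and $d_\infty$ is a stable metric. $\mathrm{st}(X)$ denotes the concatenations of elements of $X$; a subset $N\subset M$ is stable finite if $N=\{\sum_k1_{A_k}y_k:y_k\in\mathrm{st}(X_k)\}$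 with finite nonempty $X_k\subset M$. $M$ is stable totally bounded for $d_\infty$ if for every $r\in L^0_{++}$ there is a stable finite $N\subset M$ with $M=\bigcup_{g\in N}\{f:d_\infty(f,g)<r\}$. $M$ is stable equicontinuous if for every $x\in K$ and $r\in L^0_{++}$ there is a neighbourhood $V$ of $x$ with $|f(x)-f(y)|\le r$ for all $y\in V$ and $f\in M$. *)

theory Defs
  imports "HOL-Probability.Probability"
begin

text \<open>Elements of L^0 are represented by Borel measurable functions on the sample space;
  equality and order in L^0 are a.e. equality and a.e. order.\<close>

definition L0 :: "'w measure \<Rightarrow> ('w \<Rightarrow> real) set" where
  "L0 P = borel_measurable P"

definition eqae :: "'w measure \<Rightarrow> ('w \<Rightarrow> real) \<Rightarrow> ('w \<Rightarrow> real) \<Rightarrow> bool" where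
  "eqae P s t \<longleftrightarrow> (AE w in P. s w = t w)"

definition leae :: "'w measure \<Rightarrow> ('w \<Rightarrow> real) \<Rightarrow> ('w \<Rightarrow> real) \<Rightarrow> bool" where
  "leae P s t \<longleftrightarrow> (AE w in P. s w \<le> t w)"

definition ltae :: "'w measure \<Rightarrow> ('w \<Rightarrow> real) \<Rightarrow> ('w \<Rightarrow> real) \<Rightarrow> bool" where
  "ltae P s t \<longleftrightarrow> (AE w in P. s w < t w)"

definition L0pp :: "'w measure \<Rightarrow> ('w \<Rightarrow> real) set" where
  "L0pp P = {r \<in> L0 P. AE w in P. 0 < r w}"

text \<open>Countable measurable partitions (pieces may be empty, so finite partitions are included).\<close>
definition l0_partition :: "'w measure \<Rightarrow> (nat \<Rightarrow> 'w set) \<Rightarrow> bool" where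
  "l0_partition P A \<longleftrightarrow> (\<forall>k. A k \<in> sets P) \<and> disjoint_family A \<and> (\<Union>k. A k) = space P"

definition l0cc :: "(nat \<Rightarrow> 'w set) \<Rightarrow> (nat \<Rightarrow> 'w \<Rightarrow> real) \<Rightarrow> 'w \<Rightarrow> real" where
  "l0cc A r = (\<lambda>w. \<Sum>k. indicator (A k) w * r k w)"

definition l0_ball :: "'w measure \<Rightarrow> ('w \<Rightarrow> real) \<Rightarrow> ('w \<Rightarrow> real) \<Rightarrow> ('w \<Rightarrow> real) set" where
  "l0_ball P t r = {s \<in> L0 P. ltae P (\<lambda>w. \<bar>s w - t w\<bar>) r}"

definition l0_open :: "'w measure \<Rightarrow> ('w \<Rightarrow> real) set \<Rightarrow> bool" where
  "l0_open P U \<longleftrightarrow> U \<subseteq> L0 P \<and>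
     (\<forall>s\<in>U. \<exists>t\<in>L0 P. \<exists>r\<in>L0pp P. s \<in> l0_ball P t r \<and> l0_ball P t r \<subseteq> U)"

definition stable_L0_module :: "'w measure \<Rightarrow> (('w \<Rightarrow> real) \<Rightarrow> 'e::ab_group_add \<Rightarrow> 'e) \<Rightarrow> bool" where
  "stable_L0_module P smul \<longleftrightarrow>
     (\<forall>r\<in>L0 P. \<forall>x y. smul r (x + y) = smul r x + smul r y) \<and>
     (\<forall>r\<in>L0 P. \<forall>s\<in>L0 P. \<forall>x. smul (\<lambda>w. r w + s w) x = smul r x + smul s x) \<and>
     (\<forall>r\<in>L0 P. \<forall>s\<in>L0 P. \<forall>x. smul (\<lambda>w. r w * s w) x = smul r (smul s x)) \<and>
     (\<forall>x. smul (\<lambda>w. 1) x = x) \<and>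
     (\<forall>r\<in>L0 P. \<forall>s\<in>L0 P. \<forall>x. eqae P r s \<longrightarrow> smul r x = smul s x) \<and>
     (\<forall>A xs. l0_partition P A \<longrightarrow>
        (\<exists>!x. \<forall>k. smul (indicator (A k)) x = smul (indicator (A k)) (xs k)))"

definition mcc :: "(('w \<Rightarrow> real) \<Rightarrow> 'e \<Rightarrow> 'e) \<Rightarrow> (nat \<Rightarrow> 'w set) \<Rightarrow> (nat \<Rightarrow> 'e) \<Rightarrow> 'e" where
  "mcc smul A xs = (THE x. \<forall>k. smul (indicator (A k)) x = smul (indicator (A k)) (xs k))"

definition stable_set :: "'w measure \<Rightarrow> (('w \<Rightarrow> real) \<Rightarrow> 'e \<Rightarrow> 'e) \<Rightarrow> 'e set \<Rightarrow> bool" where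
  "stable_set P smul S \<longleftrightarrow> S \<noteq> {} \<and>
     (\<forall>A xs. l0_partition P A \<and> (\<forall>k. xs k \<in> S) \<longrightarrow> mcc smul A xs \<in> S)"

definition cc_sets :: "(('w \<Rightarrow> real) \<Rightarrow> 'e \<Rightarrow> 'e) \<Rightarrow> (nat \<Rightarrow> 'w set) \<Rightarrow> (nat \<Rightarrow> 'e set) \<Rightarrow> 'e set" where
  "cc_sets smul A Ys = {mcc smul A xs | xs. \<forall>k. xs k \<in> Ys k}"

definition stable_coll :: "'w measure \<Rightarrow> (('w \<Rightarrow> real) \<Rightarrow> 'e \<Rightarrow> 'e) \<Rightarrow> 'e set set \<Rightarrow> bool" where
  "stable_coll P smul C \<longleftrightarrow> C \<noteq> {} \<and> (\<forall>S\<in>C. stable_set P smul S) \<and>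
     (\<forall>A Ys. l0_partition P A \<and> (\<forall>k. Ys k \<in> C) \<longrightarrow> cc_sets smul A Ys \<in> C)"

definition is_base :: "'e topology \<Rightarrow> 'e set set \<Rightarrow> bool" where
  "is_base X B \<longleftrightarrow> (\<forall>U\<in>B. openin X U) \<and>
     (\<forall>U. openin X U \<longrightarrow> (\<forall>x\<in>U. \<exists>V\<in>B. x \<in> V \<and> V \<subseteq> U))"

definition stable_top_space :: "'w measure \<Rightarrow> (('w \<Rightarrow> real) \<Rightarrow> 'e \<Rightarrow> 'e) \<Rightarrow> 'e topology \<Rightarrow> bool" where
  "stable_top_space P smul X \<longleftrightarrow> stable_set P smul (topspace X) \<and>
     (\<exists>B. is_base X B \<and> stable_coll P smul B)"

definition filter_on :: "'e set \<Rightarrow> 'e set set \<Rightarrow> bool" where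
  "filter_on K F \<longleftrightarrow> F \<subseteq> Pow K \<and> K \<in> F \<and> {} \<notin> F \<and>
     (\<forall>U\<in>F. \<forall>V. U \<subseteq> V \<and> V \<subseteq> K \<longrightarrow> V \<in> F) \<and>
     (\<forall>U\<in>F. \<forall>V\<in>F. U \<inter> V \<in> F)"

definition stable_filter :: "'w measure \<Rightarrow> (('w \<Rightarrow> real) \<Rightarrow> 'e \<Rightarrow> 'e) \<Rightarrow> 'e set \<Rightarrow> 'e set set \<Rightarrow> bool" where
  "stable_filter P smul K F \<longleftrightarrow> filter_on K F \<and>
     (\<exists>B. B \<subseteq> F \<and> (\<forall>U\<in>F. \<exists>V\<in>B. V \<subseteq> U) \<and> stable_coll P smul B)"

definition stable_compact :: "'w measure \<Rightarrow> (('w \<Rightarrow> real) \<Rightarrow> 'e \<Rightarrow> 'e) \<Rightarrow> 'e topology \<Rightarrow> bool" where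
  "stable_compact P smul X \<longleftrightarrow>
     (\<forall>F. stable_filter P smul (topspace X) F \<longrightarrow>
        (\<exists>x\<in>topspace X. \<forall>U\<in>F. x \<in> X closure_of U))"

definition stable_map :: "'w measure \<Rightarrow> (('w \<Rightarrow> real) \<Rightarrow> 'e \<Rightarrow> 'e) \<Rightarrow> 'e set \<Rightarrow> ('e \<Rightarrow> 'w \<Rightarrow> real) \<Rightarrow> bool" where
  "stable_map P smul K f \<longleftrightarrow>
     (\<forall>A xs. l0_partition P A \<and> (\<forall>k. xs k \<in> K) \<longrightarrow>
        eqae P (f (mcc smul A xs)) (l0cc A (\<lambda>k. f (xs k))))"

definition in_CKL0 :: "'w measure \<Rightarrow> (('w \<Rightarrow> real) \<Rightarrow> 'e \<Rightarrow> 'e) \<Rightarrow> 'e topology \<Rightarrow> ('e \<Rightarrow> 'w \<Rightarrow> real) \<Rightarrow> bool" where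
  "in_CKL0 P smul X f \<longleftrightarrow> (\<forall>x\<in>topspace X. f x \<in> L0 P) \<and> stable_map P smul (topspace X) f \<and>
     (\<forall>W. l0_open P W \<longrightarrow> openin X {x \<in> topspace X. f x \<in> W})"

definition fcc :: "(nat \<Rightarrow> 'w set) \<Rightarrow> (nat \<Rightarrow> 'e \<Rightarrow> 'w \<Rightarrow> real) \<Rightarrow> 'e \<Rightarrow> 'w \<Rightarrow> real" where
  "fcc A fs = (\<lambda>x. l0cc A (\<lambda>k. fs k x))"

text \<open>A stable subset of C(K,L^0) (functions identified when a.e. equal at every point of K).\<close>
definition stable_subset_C :: "'w measure \<Rightarrow> (('w \<Rightarrow> real) \<Rightarrow> 'e \<Rightarrow> 'e) \<Rightarrow> 'e topology \<Rightarrow> ('e \<Rightarrow> 'w \<Rightarrow> real) set \<Rightarrow> bool" where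
  "stable_subset_C P smul X M \<longleftrightarrow> M \<noteq> {} \<and> (\<forall>f\<in>M. in_CKL0 P smul X f) \<and>
     (\<forall>A fs. l0_partition P A \<and> (\<forall>k. fs k \<in> M) \<longrightarrow>
        (\<exists>g\<in>M. \<forall>x\<in>topspace X. eqae P (g x) (fcc A fs x)))"

text \<open>d_infty(f,g) = max {|f x - g x| : x in K}, the maximum w.r.t. the a.e. order (attained).\<close>
definition dinf :: "'w measure \<Rightarrow> 'e topology \<Rightarrow> ('e \<Rightarrow> 'w \<Rightarrow> real) \<Rightarrow> ('e \<Rightarrow> 'w \<Rightarrow> real) \<Rightarrow> 'w \<Rightarrow> real" where
  "dinf P X f g = (SOME m. \<exists>x\<in>topspace X. m = (\<lambda>w. \<bar>f x w - g x w\<bar>) \<and>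
      (\<forall>y\<in>topspace X. leae P (\<lambda>w. \<bar>f y w - g y w\<bar>) m))"

definition stF :: "'w measure \<Rightarrow> ('e \<Rightarrow> 'w \<Rightarrow> real) set \<Rightarrow> ('e \<Rightarrow> 'w \<Rightarrow> real) set" where
  "stF P Y = {fcc B zs | B zs. l0_partition P B \<and> (\<forall>j. zs j \<in> Y)}"

definition stable_finite :: "'w measure \<Rightarrow> ('e \<Rightarrow> 'w \<Rightarrow> real) set \<Rightarrow> ('e \<Rightarrow> 'w \<Rightarrow> real) set \<Rightarrow> bool" where
  "stable_finite P M N \<longleftrightarrow> (\<exists>A Y. l0_partition P A \<and>
     (\<forall>k. finite (Y k) \<and> Y k \<noteq> {} \<and> Y k \<subseteq> M) \<and>
     N = {fcc A ys | ys. \<forall>k. ys k \<in> stF P (Y k)})"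

definition stable_totally_bounded :: "'w measure \<Rightarrow> 'e topology \<Rightarrow> ('e \<Rightarrow> 'w \<Rightarrow> real) set \<Rightarrow> bool" where
  "stable_totally_bounded P X M \<longleftrightarrow>
     (\<forall>r\<in>L0pp P. \<exists>N. stable_finite P M N \<and>
        (\<forall>f\<in>M. \<exists>g\<in>N. ltae P (dinf P X f g) r))"

definition pointwise_bounded :: "'w measure \<Rightarrow> 'e topology \<Rightarrow> ('e \<Rightarrow> 'w \<Rightarrow> real) set \<Rightarrow> bool" where
  "pointwise_bounded P X M \<longleftrightarrow>
     (\<forall>x\<in>topspace X. \<exists>rx\<in>L0 P. \<forall>f\<in>M. leae P (\<lambda>w. \<bar>f x w\<bar>) rx)"

definition stable_equicontinuous :: "'w measure \<Rightarrow> 'e topology \<Rightarrow> ('e \<Rightarrow> 'w \<Rightarrow> real) set \<Rightarrow> bool" where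
  "stable_equicontinuous P X M \<longleftrightarrow>
     (\<forall>x\<in>topspace X. \<forall>r\<in>L0pp P. \<exists>V. (\<exists>U. openin X U \<and> x \<in> U \<and> U \<subseteq> V) \<and> V \<subseteq> topspace X \<and>
        (\<forall>y\<in>V. \<forall>f\<in>M. leae P (\<lambda>w. \<bar>f x w - f y w\<bar>) r))"

end

theory Submission
  imports Defs
begin


lemma L0_indicator[simp]: "S \<in> sets P \<Longrightarrow> indicator S \<in> L0 P"
  unfolding L0_def by simp

definition part2 :: "'w measure \<Rightarrow> 'w set \<Rightarrow> nat \<Rightarrow> 'w set" where
  "part2 P S = (\<lambda>k. if k = 0 then S else if k = 1 then space P - S else {})"

lemma part2_partition: "S \<in> sets P \<Longrightarrow> l0_partition P (part2 P S)"
  unfolding l0_partition_def part2_def disjoint_family_on_def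
  using sets.sets_into_space[of S P]
  by (auto split: if_splits)

lemma partition_sets: "l0_partition P A \<Longrightarrow> A k \<in> sets P"
  unfolding l0_partition_def by auto

lemma partition_space: "l0_partition P A \<Longrightarrow> w \<in> space P \<Longrightarrow> \<exists>k. w \<in> A k"
  unfolding l0_partition_def by auto

lemma partition_sub: "l0_partition P A \<Longrightarrow> w \<in> A k \<Longrightarrow> w \<in> space P"
  unfolding l0_partition_def by auto

lemma partition_unique: "l0_partition P A \<Longrightarrow> w \<in> A k \<Longrightarrow> w \<in> A j \<Longrightarrow> j = k"
  unfolding l0_partition_def disjoint_family_on_def by auto

lemma l0cc_at:
  assumes "l0_partition P A" "w \<in> A k"
  shows "l0cc A r w = r k w"
proof -
  have "(\<lambda>j. indicator (A j) w * r j w) = (\<lambda>j. if j = k then r k w else 0)"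
  proof
    fix j show "indicator (A j) w * r j w = (if j = k then r k w else 0)"
    proof (cases "j = k")
      case True then show ?thesis using assms(2) by simp
    next
      case False then have "w \<notin> A j" using partition_unique[OF assms(1) _ assms(2)] by blast
      then show ?thesis using False by simp
    qed
  qed
  then have "(\<lambda>j. indicator (A j) w * r j w) sums r k w"
    using sums_single[of k "\<lambda>_. r k w"] by simp
  then show ?thesis unfolding l0cc_def by (rule sums_unique[symmetric])
qed

lemma fcc_at:
  assumes "l0_partition P A" "w \<in> A k"
  shows "fcc A fs x w = fs k x w"
  unfolding fcc_def using l0cc_at[OF assms] by simp

lemma l0cc_measurable:
  assumes "l0_partition P A" "\<And>k. r k \<in> borel_measurable P"
  shows "l0cc A r \<in> borel_measurable P"
proof -
  have "(\<lambda>w. \<Sum>k. indicator (A k) w * r k w) \<in> borel_measurable P"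
  proof (rule borel_measurable_suminf)
    fix k show "(\<lambda>w. indicator (A k) w * r k w) \<in> borel_measurable P"
      using assms partition_sets[OF assms(1)] by auto
  qed
  then show ?thesis unfolding l0cc_def .
qed


locale SM = prob_space P for P :: "'w measure" +
  fixes smul :: "('w \<Rightarrow> real) \<Rightarrow> 'e::ab_group_add \<Rightarrow> 'e"
  assumes modl: "stable_L0_module P smul"
begin

lemma disj_sets: "(\<And>n. S n \<in> sets P) \<Longrightarrow> disjointed S n \<in> sets P"
  using sets.range_disjointed_sets[of S P] by blast

definition loc :: "'w set \<Rightarrow> 'e \<Rightarrow> 'e \<Rightarrow> bool" where
  "loc S a b \<longleftrightarrow> smul (indicator S) a = smul (indicator S) b"

lemma m_mult: "r \<in> L0 P \<Longrightarrow> s \<in> L0 P \<Longrightarrow> smul (\<lambda>w. r w * s w) x = smul r (smul s x)"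
  using modl unfolding stable_L0_module_def by blast

lemma m_one: "smul (\<lambda>w. 1) x = x"
  using modl unfolding stable_L0_module_def by blast

lemma m_ae: "r \<in> L0 P \<Longrightarrow> s \<in> L0 P \<Longrightarrow> eqae P r s \<Longrightarrow> smul r x = smul s x"
  using modl unfolding stable_L0_module_def by blast

lemma m_part: "l0_partition P A \<Longrightarrow> \<exists>!x. \<forall>k. smul (indicator (A k)) x = smul (indicator (A k)) (xs k)"
  using modl unfolding stable_L0_module_def by blast

lemma m_radd: "r \<in> L0 P \<Longrightarrow> s \<in> L0 P \<Longrightarrow> smul (\<lambda>w. r w + s w) x = smul r x + smul s x"
  using modl unfolding stable_L0_module_def by blast

lemma smul_empty[simp]: "smul (indicator {}) x = 0"
proof -
  have z: "(\<lambda>w. 0::real) \<in> L0 P" unfolding L0_def by simp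
  have "smul (\<lambda>w. 0 + 0) x = smul (\<lambda>w. 0) x + smul (\<lambda>w. 0) x" using m_radd[OF z z] .
  then have "smul (\<lambda>w. 0) x = 0" by simp
  moreover have "(indicator {} :: 'w \<Rightarrow> real) = (\<lambda>w. 0)" by (rule ext) simp
  ultimately show ?thesis by simp
qed

lemma smul_ind_ind: "S \<in> sets P \<Longrightarrow> T \<in> sets P \<Longrightarrow>
   smul (indicator S) (smul (indicator T) x) = smul (indicator (S \<inter> T)) x"
proof -
  assume a: "S \<in> sets P" "T \<in> sets P"
  have "(\<lambda>w. indicator S w * indicator T w) = (indicator (S \<inter> T) :: 'w \<Rightarrow> real)"
    by (rule ext) (simp add: indicator_inter_arith)
  then show ?thesis using m_mult[of "indicator S" "indicator T" x] a by simp
qed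

lemma smul_space: "smul (indicator (space P)) x = x"
proof -
  have "eqae P (indicator (space P)) (\<lambda>w. 1)" unfolding eqae_def by (rule AE_I2) simp
  moreover have "(\<lambda>w. 1::real) \<in> L0 P" unfolding L0_def by simp
  ultimately have "smul (indicator (space P)) x = smul (\<lambda>w. 1) x"
    by (intro m_ae) simp_all
  then show ?thesis using m_one by simp
qed

lemma loc_refl[simp]: "loc S a a" unfolding loc_def by simp
lemma loc_sym: "loc S a b \<Longrightarrow> loc S b a" unfolding loc_def by simp
lemma loc_trans: "loc S a b \<Longrightarrow> loc S b c \<Longrightarrow> loc S a c" unfolding loc_def by simp

lemma loc_restrict: "loc S a b \<Longrightarrow> S \<in> sets P \<Longrightarrow> T \<in> sets P \<Longrightarrow> T \<subseteq> S \<Longrightarrow> loc T a b"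
proof -
  assume a: "loc S a b" "S \<in> sets P" "T \<in> sets P" "T \<subseteq> S"
  have "smul (indicator T) a = smul (indicator T) (smul (indicator S) a)"
    using smul_ind_ind[OF a(3) a(2)] a(4) by (simp add: Int_absorb2)
  also have "\<dots> = smul (indicator T) (smul (indicator S) b)" using a(1) unfolding loc_def by simp
  also have "\<dots> = smul (indicator T) b"
    using smul_ind_ind[OF a(3) a(2)] a(4) by (simp add: Int_absorb2)
  finally show ?thesis unfolding loc_def .
qed

lemma loc_space: "loc (space P) a b \<Longrightarrow> a = b"
  unfolding loc_def smul_space .

lemma loc_partition_eq: "l0_partition P A \<Longrightarrow> (\<And>k. loc (A k) a b) \<Longrightarrow> a = b"
proof -
  assume A: "l0_partition P A" and l: "\<And>k. loc (A k) a b"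
  from m_part[OF A, of "\<lambda>k. a"] obtain x where "\<And>y. (\<forall>k. smul (indicator (A k)) y = smul (indicator (A k)) a) \<Longrightarrow> y = x"
    by metis
  from this[of a] this[of b] l show ?thesis unfolding loc_def by (metis)
qed

lemma mcc_loc: "l0_partition P A \<Longrightarrow> loc (A k) (mcc smul A xs) (xs k)"
proof -
  assume A: "l0_partition P A"
  from theI'[OF m_part[OF A, of xs]] show ?thesis unfolding mcc_def loc_def by blast
qed

lemma mcc_unique: "l0_partition P A \<Longrightarrow> (\<And>k. loc (A k) x (xs k)) \<Longrightarrow> mcc smul A xs = x"
proof -
  assume A: "l0_partition P A" and l: "\<And>k. loc (A k) x (xs k)"
  show ?thesis unfolding mcc_def
    by (rule the1_equality[OF m_part[OF A]]) (use l in \<open>auto simp: loc_def\<close>)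
qed

lemma mcc_const: "l0_partition P A \<Longrightarrow> mcc smul A (\<lambda>k. x) = x"
  by (rule mcc_unique) auto

lemma loc_Union:
  fixes S :: "nat \<Rightarrow> 'w set"
  assumes S: "\<And>n. S n \<in> sets P" and l: "\<And>n. loc (S n) a b"
  shows "loc (\<Union>n. S n) a b"
proof -
  define U where "U = (\<Union>n. S n)"
  have U: "U \<in> sets P" unfolding U_def using S by blast
  define D where "D = (\<lambda>n. if n = 0 then space P - U else disjointed S (n - 1))"
  have Ds: "D n \<in> sets P" for n unfolding D_def using S U disj_sets[of S]
    by auto
  have D: "l0_partition P D" unfolding l0_partition_def
  proof (intro conjI allI)
    show "D k \<in> sets P" for k by (rule Ds)
    show "disjoint_family D" unfolding disjoint_family_on_def
    proof (intro ballI impI)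
      fix m n :: nat assume "m \<noteq> n"
      show "D m \<inter> D n = {}"
      proof (cases "m = 0")
        case True then have "n \<noteq> 0" using \<open>m \<noteq> n\<close> by simp
        then show ?thesis using True unfolding D_def U_def using disjointed_subset[of S "n - 1"] by auto
      next
        case False
        show ?thesis
        proof (cases "n = 0")
          case True then show ?thesis using False unfolding D_def U_def using disjointed_subset[of S "m - 1"] by auto
        next
          case n: False
          then have "m - 1 \<noteq> n - 1" using False \<open>m \<noteq> n\<close> by simp
          then show ?thesis using False n disjoint_family_disjointed[of S] unfolding D_def disjoint_family_on_def by auto
        qed
      qed
    qed
    show "(\<Union>k. D k) = space P"
    proof
      show "(\<Union>k. D k) \<subseteq> space P" using Ds sets.sets_into_space by blast
      show "space P \<subseteq> (\<Union>k. D k)"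
      proof
        fix w assume w: "w \<in> space P"
        show "w \<in> (\<Union>k. D k)"
        proof (cases "w \<in> U")
          case False then show ?thesis using w unfolding D_def by (intro UN_I[of 0]) auto
        next
          case True
          then have "w \<in> (\<Union>n. disjointed S n)" unfolding U_def UN_disjointed_eq .
          then obtain n where "w \<in> disjointed S n" by blast
          then show ?thesis unfolding D_def by (intro UN_I[of "Suc n"]) auto
        qed
      qed
    qed
  qed
  have "smul (indicator U) a = smul (indicator U) b"
  proof (rule loc_partition_eq[OF D])
    fix k
    show "loc (D k) (smul (indicator U) a) (smul (indicator U) b)"
    proof (cases "k = 0")
      case True
      then have "D k \<inter> U = {}" unfolding D_def by auto
      then show ?thesis unfolding loc_def using smul_ind_ind[OF Ds U] by simp
    next
      case False
      then have sub: "D k \<subseteq> S (k - 1)" "D k \<subseteq> U" unfolding D_def U_def using disjointed_subset[of S "k - 1"] by auto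
      then have "D k \<inter> U = D k" by auto
      moreover have "loc (D k) a b" using loc_restrict[OF l S Ds sub(1)] .
      ultimately show ?thesis unfolding loc_def using smul_ind_ind[OF Ds U] by simp
    qed
  qed
  then show ?thesis unfolding loc_def U_def .
qed

end


context prob_space begin

lemma exhaust:
  assumes sub: "\<S> \<subseteq> events" and ne: "\<S> \<noteq> {}"
    and un: "\<And>S::nat \<Rightarrow> 'a set. (\<And>n. S n \<in> \<S>) \<Longrightarrow> (\<Union>n. S n) \<in> \<S>"
  shows "\<exists>S\<in>\<S>. \<forall>T\<in>\<S>. AE w in M. w \<in> T \<longrightarrow> w \<in> S"
proof -
  define c where "c = (SUP T\<in>\<S>. prob T)"
  have bdd: "bdd_above (prob ` \<S>)" by (rule bdd_aboveI[of _ 1]) auto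
  have le: "prob T \<le> c" if "T \<in> \<S>" for T unfolding c_def by (rule cSUP_upper[OF that bdd])
  have "\<exists>T\<in>\<S>. c - 1 / (real n + 1) < prob T" for n
  proof -
    have "c - 1 / (real n + 1) < c" by simp
    then show ?thesis unfolding c_def using less_cSUP_iff[OF ne bdd] by blast
  qed
  then obtain T where T: "\<And>n. T n \<in> \<S>" "\<And>n. c - 1 / (real n + 1) < prob (T n)" by metis
  define S where "S = (\<Union>n. T n)"
  have S: "S \<in> \<S>" unfolding S_def using un T(1) .
  have Sev: "S \<in> events" using S sub by blast
  have cS: "c \<le> prob S"
  proof (rule field_le_epsilon)
    fix e :: real assume e: "0 < e"
    obtain n :: nat where n: "1 / e < real n" using reals_Archimedean2 by blast
    then have "1 / (real n + 1) < e" using e by (simp add: field_simps)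
    moreover have "prob (T n) \<le> prob S" unfolding S_def
      by (rule finite_measure_mono) (use Sev S_def in auto)
    ultimately show "c \<le> prob S + e" using T(2)[of n] by linarith
  qed
  have "\<forall>T\<in>\<S>. AE w in M. w \<in> T \<longrightarrow> w \<in> S"
  proof
    fix U assume U: "U \<in> \<S>"
    have Uev: "U \<in> events" using U sub by blast
    define V where "V = (\<lambda>n::nat. if n = 0 then S else U)"
    have "(\<Union>n. V n) \<in> \<S>" using un[of V] S U unfolding V_def by auto
    moreover have "(\<Union>n. V n) = S \<union> U" unfolding V_def by (auto split: if_splits)
    ultimately have "S \<union> U \<in> \<S>" by simp
    then have "prob (S \<union> U) \<le> c" by (rule le)
    moreover have "prob (S \<union> U) = prob S + prob (U - S)" using finite_measure_Union'[OF Sev Uev] .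
    ultimately have "prob (U - S) \<le> 0" using cS by linarith
    then have "prob (U - S) = 0" using measure_nonneg[of M "U - S"] by linarith
    then have "AE w in M. w \<notin> U - S" using prob_eq_0[of "U - S"] Uev Sev by blast
    then show "AE w in M. w \<in> U \<longrightarrow> w \<in> S" by (rule AE_mp) (intro AE_I2, blast)
  qed
  then show ?thesis using S by blast
qed

definition dpart :: "(nat \<Rightarrow> 'a set) \<Rightarrow> nat \<Rightarrow> 'a set" where
  "dpart T = (\<lambda>n. if n = 0 then space M - (\<Union>i. T i) else disjointed T (n - 1))"

lemma dpart_partition:
  fixes T :: "nat \<Rightarrow> 'a set"
  assumes S: "\<And>n. T n \<in> events"
  shows "l0_partition M (dpart T)"
proof -
  define U where "U = (\<Union>n. T n)"
  have U: "U \<in> sets M" unfolding U_def using S by blast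
  have dj: "disjointed T n \<in> events" for n using sets.range_disjointed_sets[of T M] S by blast
  let ?D = "dpart T"
  have Ds: "?D n \<in> sets M" for n unfolding dpart_def using U dj U_def by auto
  show ?thesis unfolding l0_partition_def
  proof (intro conjI allI)
    show "?D k \<in> sets M" for k by (rule Ds)
    show "disjoint_family ?D" unfolding disjoint_family_on_def
    proof (intro ballI impI)
      fix m n :: nat assume "m \<noteq> n"
      show "?D m \<inter> ?D n = {}"
      proof (cases "m = 0")
        case True then have "n \<noteq> 0" using \<open>m \<noteq> n\<close> by simp
        then show ?thesis using True unfolding dpart_def using disjointed_subset[of T "n - 1"] by auto
      next
        case False
        show ?thesis
        proof (cases "n = 0")
          case True then show ?thesis using False unfolding dpart_def using disjointed_subset[of T "m - 1"] by auto
        next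
          case n: False
          then have "m - 1 \<noteq> n - 1" using False \<open>m \<noteq> n\<close> by simp
          then show ?thesis using False n disjoint_family_disjointed[of T] unfolding dpart_def disjoint_family_on_def by auto
        qed
      qed
    qed
    show "(\<Union>k. ?D k) = space M"
    proof
      show "(\<Union>k. ?D k) \<subseteq> space M" using Ds sets.sets_into_space by blast
      show "space M \<subseteq> (\<Union>k. ?D k)"
      proof
        fix w assume w: "w \<in> space M"
        show "w \<in> (\<Union>k. ?D k)"
        proof (cases "w \<in> U")
          case False then show ?thesis using w unfolding dpart_def U_def by (intro UN_I[of 0]) auto
        next
          case True
          then have "w \<in> (\<Union>n. disjointed T n)" unfolding U_def UN_disjointed_eq .
          then obtain n where "w \<in> disjointed T n" by blast
          then show ?thesis unfolding dpart_def by (intro UN_I[of "Suc n"]) auto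
        qed
      qed
    qed
  qed
qed

lemma dpart_Suc: "dpart T (Suc n) = disjointed T n" unfolding dpart_def by simp

definition refine :: "(nat \<Rightarrow> 'a set) \<Rightarrow> (nat \<Rightarrow> nat \<Rightarrow> 'a set) \<Rightarrow> nat \<Rightarrow> 'a set" where
  "refine A B = (\<lambda>m. case prod_decode m of (n, k) \<Rightarrow> A n \<inter> B n k)"

lemma refine_partition:
  assumes A: "l0_partition M A" and B: "\<And>n. l0_partition M (B n)"
  shows "l0_partition M (refine A B)"
  unfolding l0_partition_def
proof (intro conjI allI)
  show "refine A B m \<in> sets M" for m
    unfolding refine_def using partition_sets[OF A] partition_sets[OF B]
    by (auto split: prod.splits)
  show "disjoint_family (refine A B)" unfolding disjoint_family_on_def
  proof (intro ballI impI)
    fix m m' :: nat assume "m \<noteq> m'"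
    obtain n k where d: "prod_decode m = (n, k)" by (metis surj_pair)
    obtain n' k' where d': "prod_decode m' = (n', k')" by (metis surj_pair)
    have "(n, k) \<noteq> (n', k')" using \<open>m \<noteq> m'\<close> d d' by (metis prod_decode_inverse)
    show "refine A B m \<inter> refine A B m' = {}"
    proof (rule ccontr)
      assume "refine A B m \<inter> refine A B m' \<noteq> {}"
      then obtain w where w: "w \<in> A n" "w \<in> B n k" "w \<in> A n'" "w \<in> B n' k'"
        unfolding refine_def d d' by auto
      have "n' = n" using partition_unique[OF A w(1) w(3)] .
      then have "k' = k" using partition_unique[OF B w(2)] w(4) by blast
      then show False using \<open>n' = n\<close> \<open>(n, k) \<noteq> (n', k')\<close> by simp
    qed
  qed
  show "(\<Union>m. refine A B m) = space M"
  proof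
    show "(\<Union>m. refine A B m) \<subseteq> space M"
      unfolding refine_def using partition_sub[OF A] by (auto split: prod.splits)
    show "space M \<subseteq> (\<Union>m. refine A B m)"
    proof
      fix w assume w: "w \<in> space M"
      obtain n where n: "w \<in> A n" using partition_space[OF A w] by blast
      obtain k where k: "w \<in> B n k" using partition_space[OF B w] by blast
      show "w \<in> (\<Union>m. refine A B m)"
        by (rule UN_I[of "prod_encode (n, k)"]) (use n k in \<open>auto simp: refine_def\<close>)
    qed
  qed
qed

lemma refine_at: "w \<in> refine A B m \<Longrightarrow> prod_decode m = (n, k) \<Longrightarrow> w \<in> A n \<and> w \<in> B n k"
  unfolding refine_def by auto

lemma refine_enc: "refine A B (prod_encode (n, k)) = A n \<inter> B n k"
  unfolding refine_def by simp

lemma AE_partition: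
  assumes A: "l0_partition M A" and h: "\<And>k. AE w in M. w \<in> A k \<longrightarrow> Q w"
  shows "AE w in M. Q w"
proof -
  have "AE w in M. \<forall>k. w \<in> A k \<longrightarrow> Q w" unfolding AE_all_countable using h by blast
  then show ?thesis
  proof (rule AE_mp)
    show "AE w in M. (\<forall>k. w \<in> A k \<longrightarrow> Q w) \<longrightarrow> Q w"
      by (rule AE_I2) (use partition_space[OF A] in blast)
  qed
qed

lemma AE_space: "AE w in M. w \<in> space M" by (rule AE_I2) simp

end


context SM begin

lemma stable_set_ne: "stable_set P smul S \<Longrightarrow> S \<noteq> {}"
  unfolding stable_set_def by blast

lemma stable_set_mcc: "stable_set P smul S \<Longrightarrow> l0_partition P A \<Longrightarrow> (\<And>k. xs k \<in> S) \<Longrightarrow> mcc smul A xs \<in> S"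
  unfolding stable_set_def by blast

lemma glue:
  fixes T :: "nat \<Rightarrow> 'w set"
  assumes Q: "stable_set P smul Q" and T: "\<And>n. T n \<in> sets P" and a: "\<And>n. a n \<in> Q"
  shows "\<exists>z\<in>Q. \<forall>n. loc (disjointed T n) z (a n)"
proof -
  define xs where "xs = (\<lambda>k. if k = 0 then a 0 else a (k - 1))"
  have D: "l0_partition P (dpart T)" using dpart_partition[OF T] .
  have "mcc smul (dpart T) xs \<in> Q" by (rule stable_set_mcc[OF Q D]) (simp add: xs_def a)
  moreover have "loc (disjointed T n) (mcc smul (dpart T) xs) (a n)" for n
    using mcc_loc[OF D, of "Suc n" xs] unfolding dpart_Suc xs_def by simp
  ultimately show ?thesis by blast
qed

lemma glue2:
  assumes Q: "stable_set P smul Q" and S: "S \<in> sets P" and a: "a \<in> Q" "b \<in> Q"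
  shows "\<exists>z\<in>Q. loc S z a \<and> loc (space P - S) z b"
proof -
  define xs where "xs = (\<lambda>k::nat. if k = 0 then a else b)"
  have D: "l0_partition P (part2 P S)" using part2_partition[OF S] .
  have "mcc smul (part2 P S) xs \<in> Q" by (rule stable_set_mcc[OF Q D]) (simp add: xs_def a)
  moreover have "loc S (mcc smul (part2 P S) xs) a"
    using mcc_loc[OF D, of 0 xs] unfolding part2_def xs_def by simp
  moreover have "loc (space P - S) (mcc smul (part2 P S) xs) b"
    using mcc_loc[OF D, of 1 xs] unfolding part2_def xs_def by simp
  ultimately show ?thesis by blast
qed

lemma loc_map:
  assumes f: "stable_map P smul K f" and y: "y \<in> K" "y' \<in> K" and S: "S \<in> sets P"
    and l: "loc S y y'"
  shows "AE w in P. w \<in> S \<longrightarrow> f y w = f y' w"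
proof -
  define xs where "xs = (\<lambda>k::nat. if k = 0 then y' else y)"
  have D: "l0_partition P (part2 P S)" using part2_partition[OF S] .
  have "mcc smul (part2 P S) xs = y"
  proof (rule mcc_unique[OF D])
    fix k show "loc (part2 P S k) y (xs k)"
      using l unfolding part2_def xs_def by auto
  qed
  moreover have "\<forall>k. xs k \<in> K" using y unfolding xs_def by auto
  ultimately have "eqae P (f y) (l0cc (part2 P S) (\<lambda>k. f (xs k)))"
    using f D unfolding stable_map_def by metis
  then show ?thesis unfolding eqae_def
  proof (rule AE_mp)
    show "AE w in P. f y w = l0cc (part2 P S) (\<lambda>k. f (xs k)) w \<longrightarrow> w \<in> S \<longrightarrow> f y w = f y' w"
    proof (rule AE_I2, intro impI)
      fix w assume "f y w = l0cc (part2 P S) (\<lambda>k. f (xs k)) w" "w \<in> S"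
      moreover have "w \<in> part2 P S 0" using \<open>w \<in> S\<close> unfolding part2_def by simp
      ultimately show "f y w = f y' w" using l0cc_at[OF D] unfolding xs_def by simp
    qed
  qed
qed

end

locale SK = SM P smul for P :: "'w measure" and smul :: "('w \<Rightarrow> real) \<Rightarrow> 'e::ab_group_add \<Rightarrow> 'e" +
  fixes X :: "'e topology" and F :: "('e \<Rightarrow> 'w \<Rightarrow> real) set"
  assumes top: "stable_top_space P smul X" and cpt: "stable_compact P smul X"
    and Fsub: "stable_subset_C P smul X F"
begin

abbreviation "K \<equiv> topspace X"

lemma K_stable: "stable_set P smul K" using top unfolding stable_top_space_def by blast

definition BB where "BB = (SOME B. is_base X B \<and> stable_coll P smul B)"

lemma BB: "is_base X BB" "stable_coll P smul BB"
  using someI_ex[of "\<lambda>B. is_base X B \<and> stable_coll P smul B"] top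
  unfolding stable_top_space_def BB_def by blast+

lemma BB_open: "U \<in> BB \<Longrightarrow> openin X U" using BB(1) unfolding is_base_def by blast
lemma BB_stable: "U \<in> BB \<Longrightarrow> stable_set P smul U" using BB(2) unfolding stable_coll_def by blast
lemma BB_base: "openin X U \<Longrightarrow> x \<in> U \<Longrightarrow> \<exists>V\<in>BB. x \<in> V \<and> V \<subseteq> U"
  using BB(1) unfolding is_base_def by blast

lemma F_C: "f \<in> F \<Longrightarrow> in_CKL0 P smul X f" using Fsub unfolding stable_subset_C_def by blast
lemma F_L0: "f \<in> F \<Longrightarrow> x \<in> K \<Longrightarrow> f x \<in> L0 P" using F_C unfolding in_CKL0_def by blast
lemma F_meas: "f \<in> F \<Longrightarrow> x \<in> K \<Longrightarrow> f x \<in> borel_measurable P" using F_L0 unfolding L0_def by blast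
lemma F_stable: "f \<in> F \<Longrightarrow> stable_map P smul K f" using F_C unfolding in_CKL0_def by blast
lemma F_cont: "f \<in> F \<Longrightarrow> l0_open P W \<Longrightarrow> openin X {x \<in> K. f x \<in> W}"
  using F_C unfolding in_CKL0_def by blast
lemma F_ne: "F \<noteq> {}" using Fsub unfolding stable_subset_C_def by blast

lemma F_loc: "f \<in> F \<Longrightarrow> y \<in> K \<Longrightarrow> y' \<in> K \<Longrightarrow> S \<in> sets P \<Longrightarrow> loc S y y' \<Longrightarrow>
   AE w in P. w \<in> S \<longrightarrow> f y w = f y' w"
  using loc_map[OF F_stable] by blast

lemma F_glue_part:
  assumes A: "l0_partition P A" and fs: "\<And>k. fs k \<in> F"
  shows "\<exists>g\<in>F. \<forall>x\<in>K. \<forall>k. AE w in P. w \<in> A k \<longrightarrow> g x w = fs k x w"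
proof -
  obtain g where g: "g \<in> F" "\<forall>x\<in>K. eqae P (g x) (fcc A fs x)"
    using Fsub A fs unfolding stable_subset_C_def by blast
  have "AE w in P. w \<in> A k \<longrightarrow> g x w = fs k x w" if x: "x \<in> K" for x k
  proof -
    have "AE w in P. g x w = fcc A fs x w" using g(2) x unfolding eqae_def by blast
    then show ?thesis by (rule AE_mp) (rule AE_I2, use fcc_at[OF A] in auto)
  qed
  then show ?thesis using g(1) by blast
qed

lemma F_glue:
  fixes T :: "nat \<Rightarrow> 'w set"
  assumes T: "\<And>n. T n \<in> sets P" and fs: "\<And>n. fs n \<in> F"
  shows "\<exists>g\<in>F. \<forall>x\<in>K. \<forall>n. AE w in P. w \<in> disjointed T n \<longrightarrow> g x w = fs n x w"
proof -
  define gs where "gs = (\<lambda>k. if k = 0 then fs 0 else fs (k - 1))"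
  have gs: "\<And>k. gs k \<in> F" unfolding gs_def using fs by simp
  obtain g where "g \<in> F" "\<forall>x\<in>K. \<forall>k. AE w in P. w \<in> dpart T k \<longrightarrow> g x w = gs k x w"
    using F_glue_part[OF dpart_partition[of T, OF T], of gs, OF gs] by blast
  note g = this
  show ?thesis
  proof (intro bexI[of _ g] ballI allI)
    fix x n assume "x \<in> K"
    then have "AE w in P. w \<in> dpart T (Suc n) \<longrightarrow> g x w = gs (Suc n) x w" using g(2) by blast
    then show "AE w in P. w \<in> disjointed T n \<longrightarrow> g x w = fs n x w" unfolding dpart_Suc gs_def by simp
  qed (rule g(1))
qed

end


lemma abs3: "\<bar>(a::real) - b\<bar> \<le> \<bar>c - d\<bar> + \<bar>a - c\<bar> + \<bar>b - d\<bar>" by arith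

lemma L0pp_L0: "r \<in> L0pp P \<Longrightarrow> r \<in> borel_measurable P"
  unfolding L0pp_def L0_def by blast

lemma L0pp_pos: "r \<in> L0pp P \<Longrightarrow> AE w in P. 0 < r w"
  unfolding L0pp_def by blast

lemma ball_open:
  assumes t: "t \<in> borel_measurable P" and r: "r \<in> L0pp P"
  shows "l0_open P (l0_ball P t r)"
  unfolding l0_open_def
proof (intro conjI ballI)
  show "l0_ball P t r \<subseteq> L0 P" unfolding l0_ball_def by blast
  fix s assume s: "s \<in> l0_ball P t r"
  then have sm: "s \<in> borel_measurable P" and sl: "AE w in P. \<bar>s w - t w\<bar> < r w"
    unfolding l0_ball_def L0_def ltae_def by auto
  define r' where "r' = (\<lambda>w. r w - \<bar>s w - t w\<bar>)"
  have r': "r' \<in> L0pp P" unfolding L0pp_def L0_def r'_def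
    using sm t L0pp_L0[OF r] sl by (auto elim!: AE_mp intro!: AE_I2)
  have "s \<in> l0_ball P s r'" unfolding l0_ball_def ltae_def using s L0pp_pos[OF r'] unfolding l0_ball_def
    by (auto elim!: AE_mp intro!: AE_I2)
  moreover have "l0_ball P s r' \<subseteq> l0_ball P t r"
  proof
    fix u assume "u \<in> l0_ball P s r'"
    then have u: "u \<in> L0 P" and a: "AE w in P. \<bar>u w - s w\<bar> < r' w" unfolding l0_ball_def ltae_def by auto
    have "AE w in P. \<bar>u w - t w\<bar> < r w" using a by (rule AE_mp) (rule AE_I2, unfold r'_def, arith)
    then show "u \<in> l0_ball P t r" unfolding l0_ball_def ltae_def using u by blast
  qed
  ultimately show "\<exists>t'\<in>L0 P. \<exists>r''\<in>L0pp P. s \<in> l0_ball P t' r'' \<and> l0_ball P t' r'' \<subseteq> l0_ball P t r" 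
    using sm r' unfolding L0_def by blast
qed

context SK begin

lemma F_near:
  assumes f: "f \<in> F" and x0: "x0 \<in> K" and r: "r \<in> L0pp P"
  shows "\<exists>U. openin X U \<and> x0 \<in> U \<and> (\<forall>y\<in>U. y \<in> K \<and> (AE w in P. \<bar>f y w - f x0 w\<bar> < r w))"
proof -
  let ?U = "{x \<in> K. f x \<in> l0_ball P (f x0) r}"
  have "openin X ?U" by (rule F_cont[OF f ball_open[OF F_meas[OF f x0] r]])
  moreover have "x0 \<in> ?U" unfolding l0_ball_def ltae_def using x0 F_L0[OF f x0] L0pp_pos[OF r]
    by (auto elim!: AE_mp intro!: AE_I2)
  moreover have "\<forall>y\<in>?U. y \<in> K \<and> (AE w in P. \<bar>f y w - f x0 w\<bar> < r w)"
    unfolding l0_ball_def ltae_def by auto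
  ultimately show ?thesis by blast
qed

lemma diff_closed:
  assumes f: "f \<in> F" and g: "g \<in> F" and c: "c \<in> borel_measurable P"
  shows "closedin X {x \<in> K. leae P c (\<lambda>w. \<bar>f x w - g x w\<bar>)}"
  unfolding closedin_def
proof (intro conjI)
  show "{x \<in> K. leae P c (\<lambda>w. \<bar>f x w - g x w\<bar>)} \<subseteq> K" by blast
  show "openin X (K - {x \<in> K. leae P c (\<lambda>w. \<bar>f x w - g x w\<bar>)})"
  proof (subst openin_subopen, intro ballI)
    fix x0 assume x0: "x0 \<in> K - {x \<in> K. leae P c (\<lambda>w. \<bar>f x w - g x w\<bar>)}"
    then have x0K: "x0 \<in> K" and nle: "\<not> (AE w in P. c w \<le> \<bar>f x0 w - g x0 w\<bar>)"
      unfolding leae_def by auto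
    define d where "d = (\<lambda>w. if \<bar>f x0 w - g x0 w\<bar> < c w then (c w - \<bar>f x0 w - g x0 w\<bar>) / 2 else 1)"
    have d: "d \<in> L0pp P" unfolding L0pp_def L0_def d_def
      using F_meas[OF f x0K] F_meas[OF g x0K] c by auto
    obtain U1 where U1: "openin X U1" "x0 \<in> U1" "\<forall>y\<in>U1. y \<in> K \<and> (AE w in P. \<bar>f y w - f x0 w\<bar> < d w)"
      using F_near[OF f x0K d] by blast
    obtain U2 where U2: "openin X U2" "x0 \<in> U2" "\<forall>y\<in>U2. y \<in> K \<and> (AE w in P. \<bar>g y w - g x0 w\<bar> < d w)"
      using F_near[OF g x0K d] by blast
    have "U1 \<inter> U2 \<subseteq> K - {x \<in> K. leae P c (\<lambda>w. \<bar>f x w - g x w\<bar>)}"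
    proof
      fix y assume y: "y \<in> U1 \<inter> U2"
      have yK: "y \<in> K" using y U1 by blast
      show "y \<in> K - {x \<in> K. leae P c (\<lambda>w. \<bar>f x w - g x w\<bar>)}"
      proof (rule ccontr)
        assume "y \<notin> K - {x \<in> K. leae P c (\<lambda>w. \<bar>f x w - g x w\<bar>)}"
        then have le: "AE w in P. c w \<le> \<bar>f y w - g y w\<bar>" using yK unfolding leae_def by blast
        have a1: "AE w in P. \<bar>f y w - f x0 w\<bar> < d w" using U1 y by blast
        have a2: "AE w in P. \<bar>g y w - g x0 w\<bar> < d w" using U2 y by blast
        have "AE w in P. c w \<le> \<bar>f x0 w - g x0 w\<bar>"
          using le a1 a2
        proof (eventually_elim)
          case (elim w)
          show ?case
          proof (rule ccontr)
            assume nc: "\<not> c w \<le> \<bar>f x0 w - g x0 w\<bar>"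
            then have "2 * d w = c w - \<bar>f x0 w - g x0 w\<bar>" unfolding d_def by simp
            then show False using elim nc abs3[of "f y w" "g y w" "f x0 w" "g x0 w"] by linarith
          qed
        qed
        then show False using nle by blast
      qed
    qed
    then show "\<exists>T. openin X T \<and> x0 \<in> T \<and> T \<subseteq> K - {x \<in> K. leae P c (\<lambda>w. \<bar>f x w - g x w\<bar>)}"
      using U1 U2 by (intro exI[of _ "U1 \<inter> U2"]) auto
  qed
qed

end


context SK begin

lemma max_lemma:
  fixes h :: "'e \<Rightarrow> 'w \<Rightarrow> real"
  assumes hm: "\<And>x. x \<in> K \<Longrightarrow> h x \<in> borel_measurable P"
    and hloc: "\<And>S y y'. y \<in> K \<Longrightarrow> y' \<in> K \<Longrightarrow> S \<in> sets P \<Longrightarrow> loc S y y' \<Longrightarrow>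
                 AE w in P. w \<in> S \<longrightarrow> h y w = h y' w"
    and hcl: "\<And>y. y \<in> K \<Longrightarrow> closedin X {x \<in> K. leae P (h y) (h x)}"
  shows "\<exists>x\<in>K. \<forall>y\<in>K. leae P (h y) (h x)"
proof -
  define T where "T = (\<lambda>y. {x \<in> K. leae P (h y) (h x)})"
  have yT: "y \<in> T y" if "y \<in> K" for y unfolding T_def leae_def using that by simp
  have T_mcc: "mcc smul A xs \<in> T (mcc smul A ys)"
    if A: "l0_partition P A" and xs: "\<And>k. xs k \<in> T (ys k)" and ys: "\<And>k. ys k \<in> K"
    for A :: "nat \<Rightarrow> 'w set" and xs ys :: "nat \<Rightarrow> 'e"
  proof -
    have xsK: "xs k \<in> K" for k using xs unfolding T_def by blast
    have xK: "mcc smul A xs \<in> K" by (rule stable_set_mcc[OF K_stable A xsK])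
    have yK: "mcc smul A ys \<in> K" by (rule stable_set_mcc[OF K_stable A ys])
    have "AE w in P. h (mcc smul A ys) w \<le> h (mcc smul A xs) w"
    proof (rule AE_partition[OF A])
      fix k
      have e1: "AE w in P. w \<in> A k \<longrightarrow> h (mcc smul A xs) w = h (xs k) w"
        by (rule hloc[OF xK xsK partition_sets[OF A] mcc_loc[OF A]])
      have e2: "AE w in P. w \<in> A k \<longrightarrow> h (mcc smul A ys) w = h (ys k) w"
        by (rule hloc[OF yK ys partition_sets[OF A] mcc_loc[OF A]])
      have e3: "AE w in P. h (ys k) w \<le> h (xs k) w" using xs[of k] unfolding T_def leae_def by blast
      show "AE w in P. w \<in> A k \<longrightarrow> h (mcc smul A ys) w \<le> h (mcc smul A xs) w"
        using e1 e2 e3 by eventually_elim auto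
    qed
    then show ?thesis unfolding T_def leae_def using xK by blast
  qed
  have Tstab: "stable_set P smul (T y)" if y: "y \<in> K" for y
    unfolding stable_set_def
  proof (intro conjI allI impI)
    show "T y \<noteq> {}" using yT[OF y] by blast
    fix A :: "nat \<Rightarrow> 'w set" and xs :: "nat \<Rightarrow> 'e" assume "l0_partition P A \<and> (\<forall>k. xs k \<in> T y)"
    then have A: "l0_partition P A" and xs: "\<And>k. xs k \<in> T y" by auto
    have "mcc smul A xs \<in> T (mcc smul A (\<lambda>k. y))" by (rule T_mcc[OF A xs y])
    then show "mcc smul A xs \<in> T y" using mcc_const[OF A] by simp
  qed
  have Tcc: "cc_sets smul A (\<lambda>k. T (ys k)) = T (mcc smul A ys)"
    if A: "l0_partition P A" and ys: "\<And>k. ys k \<in> K" for A :: "nat \<Rightarrow> 'w set" and ys :: "nat \<Rightarrow> 'e"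
  proof
    show "cc_sets smul A (\<lambda>k. T (ys k)) \<subseteq> T (mcc smul A ys)"
    proof
      fix x assume "x \<in> cc_sets smul A (\<lambda>k. T (ys k))"
      then obtain xs where "x = mcc smul A xs" "\<forall>k. xs k \<in> T (ys k)" unfolding cc_sets_def by blast
      then show "x \<in> T (mcc smul A ys)" using T_mcc[of A xs ys] A ys by blast
    qed
    show "T (mcc smul A ys) \<subseteq> cc_sets smul A (\<lambda>k. T (ys k))"
    proof
      fix x assume x: "x \<in> T (mcc smul A ys)"
      have xK: "x \<in> K" using x unfolding T_def by blast
      have yK: "mcc smul A ys \<in> K" by (rule stable_set_mcc[OF K_stable A ys])
      have "\<forall>k. \<exists>z. z \<in> K \<and> loc (A k) z x \<and> loc (space P - A k) z (ys k)"
        using glue2[OF K_stable partition_sets[OF A] xK ys] by blast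
      then obtain xs where xs0: "\<forall>k. xs k \<in> K \<and> loc (A k) (xs k) x \<and> loc (space P - A k) (xs k) (ys k)"
        by (rule choice[THEN exE])
      then have xs: "\<And>k. xs k \<in> K" "\<And>k. loc (A k) (xs k) x" "\<And>k. loc (space P - A k) (xs k) (ys k)"
        by auto
      have "xs k \<in> T (ys k)" for k
      proof -
        have Ak: "A k \<in> sets P" using partition_sets[OF A] .
        have e1: "AE w in P. w \<in> A k \<longrightarrow> h (xs k) w = h x w" by (rule hloc[OF xs(1) xK Ak xs(2)])
        have e2: "AE w in P. w \<in> space P - A k \<longrightarrow> h (xs k) w = h (ys k) w"
          by (rule hloc[OF xs(1) ys _ xs(3)]) (use Ak in auto)
        have e3: "AE w in P. w \<in> A k \<longrightarrow> h (mcc smul A ys) w = h (ys k) w"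
          by (rule hloc[OF yK ys Ak mcc_loc[OF A]])
        have e4: "AE w in P. h (mcc smul A ys) w \<le> h x w" using x unfolding T_def leae_def by blast
        have "AE w in P. h (ys k) w \<le> h (xs k) w"
          using e1 e2 e3 e4 AE_space by eventually_elim auto
        then show ?thesis unfolding T_def leae_def using xs(1) by blast
      qed
      moreover have "mcc smul A xs = x" by (rule mcc_unique[OF A]) (rule loc_sym[OF xs(2)])
      ultimately show "x \<in> cc_sets smul A (\<lambda>k. T (ys k))" unfolding cc_sets_def by blast
    qed
  qed
  define FF where "FF = {U. U \<subseteq> K \<and> (\<exists>y\<in>K. T y \<subseteq> U)}"
  have Kne: "K \<noteq> {}" using stable_set_ne[OF K_stable] .
  have TK: "T y \<subseteq> K" for y unfolding T_def by blast
  have dir: "\<exists>u\<in>K. T u \<subseteq> T y \<inter> T z" if y: "y \<in> K" and z: "z \<in> K" for y z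
  proof -
    define S where "S = {w \<in> space P. h z w \<le> h y w}"
    have S: "S \<in> sets P" unfolding S_def using hm[OF y] hm[OF z] by measurable
    obtain u where u: "u \<in> K" "loc S u y" "loc (space P - S) u z" using glue2[OF K_stable S y z] by blast
    have e1: "AE w in P. w \<in> S \<longrightarrow> h u w = h y w" by (rule hloc[OF u(1) y S u(2)])
    have e2: "AE w in P. w \<in> space P - S \<longrightarrow> h u w = h z w" by (rule hloc[OF u(1) z _ u(3)]) (use S in auto)
    have "T u \<subseteq> T y \<inter> T z"
    proof
      fix x assume x: "x \<in> T u"
      then have e3: "AE w in P. h u w \<le> h x w" unfolding T_def leae_def by blast
      have a1: "AE w in P. h y w \<le> h x w"
        using e1 e2 e3 AE_space by eventually_elim (auto simp: S_def)
      have a2: "AE w in P. h z w \<le> h x w"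
        using e1 e2 e3 AE_space by eventually_elim (auto simp: S_def)
      have "x \<in> K" using x unfolding T_def by blast
      then show "x \<in> T y \<inter> T z" using a1 a2 unfolding T_def leae_def by blast
    qed
    then show ?thesis using u(1) by blast
  qed
  have filt: "stable_filter P smul K FF"
    unfolding stable_filter_def
  proof (intro conjI)
    show "filter_on K FF" unfolding filter_on_def
    proof (intro conjI ballI allI impI)
      show "FF \<subseteq> Pow K" unfolding FF_def by blast
      show "K \<in> FF" unfolding FF_def using Kne TK by blast
      show "{} \<notin> FF" unfolding FF_def using yT by blast
      show "V \<in> FF" if "U \<in> FF" "U \<subseteq> V \<and> V \<subseteq> K" for U V using that unfolding FF_def by blast
      show "U \<inter> V \<in> FF" if uv: "U \<in> FF" "V \<in> FF" for U V
      proof -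
        obtain y z where "y \<in> K" "z \<in> K" "T y \<subseteq> U" "T z \<subseteq> V" "U \<subseteq> K" using uv unfolding FF_def by blast
        with dir[of y z] show ?thesis unfolding FF_def by blast
      qed
    qed
    show "\<exists>B\<subseteq>FF. (\<forall>U\<in>FF. \<exists>V\<in>B. V \<subseteq> U) \<and> stable_coll P smul B"
    proof (intro exI[of _ "T ` K"] conjI)
      show "T ` K \<subseteq> FF" unfolding FF_def using TK by blast
      show "\<forall>U\<in>FF. \<exists>V\<in>T ` K. V \<subseteq> U" unfolding FF_def by blast
      show "stable_coll P smul (T ` K)" unfolding stable_coll_def
      proof (intro conjI ballI allI impI)
        show "T ` K \<noteq> {}" using Kne by blast
        show "stable_set P smul S" if "S \<in> T ` K" for S using that Tstab by blast
        fix A :: "nat \<Rightarrow> 'w set" and Ys :: "nat \<Rightarrow> 'e set" assume a: "l0_partition P A \<and> (\<forall>k. Ys k \<in> T ` K)"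
        then have "\<forall>k. \<exists>y. y \<in> K \<and> Ys k = T y" by blast
        then obtain ys where "\<forall>k. ys k \<in> K \<and> Ys k = T (ys k)" by (rule choice[THEN exE])
        then have ys: "\<And>k. ys k \<in> K" "\<And>k. Ys k = T (ys k)" by auto
        have "Ys = (\<lambda>k. T (ys k))" using ys(2) by blast
        then have "cc_sets smul A Ys = T (mcc smul A ys)" using Tcc[of A ys] a ys(1) by blast
        moreover have "mcc smul A ys \<in> K" by (rule stable_set_mcc[OF K_stable]) (use a ys in auto)
        ultimately show "cc_sets smul A Ys \<in> T ` K" by blast
      qed
    qed
  qed
  obtain x where x: "x \<in> K" "\<forall>U\<in>FF. x \<in> X closure_of U"
    using cpt filt unfolding stable_compact_def by blast
  have "x \<in> T y" if y: "y \<in> K" for y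
  proof -
    have "T y \<in> FF" unfolding FF_def using y TK by blast
    then have "x \<in> X closure_of (T y)" using x by blast
    then show ?thesis using closure_of_closedin[OF hcl[OF y]] unfolding T_def by simp
  qed
  then show ?thesis using x(1) unfolding T_def by blast
qed

lemma dinf_max:
  assumes f: "f \<in> F" and g': "g' \<in> F" and gg: "\<forall>x\<in>K. eqae P (g x) (g' x)"
  shows "(\<exists>x\<in>K. dinf P X f g = (\<lambda>w. \<bar>f x w - g x w\<bar>)) \<and> (\<forall>y\<in>K. leae P (\<lambda>w. \<bar>f y w - g y w\<bar>) (dinf P X f g))"
proof -
  define h where "h = (\<lambda>x w. \<bar>f x w - g' x w\<bar>)"
  have "\<exists>x\<in>K. \<forall>y\<in>K. leae P (h y) (h x)"
  proof (rule max_lemma)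
    show "h x \<in> borel_measurable P" if "x \<in> K" for x
      unfolding h_def using F_meas[OF f that] F_meas[OF g' that] by measurable
    show "AE w in P. w \<in> S \<longrightarrow> h y w = h y' w"
      if "y \<in> K" "y' \<in> K" "S \<in> sets P" "loc S y y'" for S y y'
      using F_loc[OF f that] F_loc[OF g' that] unfolding h_def by eventually_elim auto
    show "closedin X {x \<in> K. leae P (h y) (h x)}" if "y \<in> K" for y
      unfolding h_def by (rule diff_closed[OF f g']) (use F_meas[OF f that] F_meas[OF g' that] in measurable)
  qed
  then obtain x where x: "x \<in> K" "\<forall>y\<in>K. leae P (h y) (h x)" by blast
  let ?Q = "\<lambda>m. \<exists>x\<in>K. m = (\<lambda>w. \<bar>f x w - g x w\<bar>) \<and> (\<forall>y\<in>K. leae P (\<lambda>w. \<bar>f y w - g y w\<bar>) m)"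
  have "?Q (\<lambda>w. \<bar>f x w - g x w\<bar>)"
  proof (intro bexI[OF _ x(1)] conjI ballI refl)
    fix y assume y: "y \<in> K"
    have "AE w in P. g y w = g' y w" "AE w in P. g x w = g' x w" using gg y x(1) unfolding eqae_def by auto
    moreover have "AE w in P. h y w \<le> h x w" using x(2) y unfolding leae_def by blast
    ultimately show "leae P (\<lambda>w. \<bar>f y w - g y w\<bar>) (\<lambda>w. \<bar>f x w - g x w\<bar>)"
      unfolding leae_def h_def by eventually_elim auto
  qed
  then have "\<exists>m. ?Q m" by blast
  then have "?Q (SOME m. ?Q m)" by (rule someI_ex)
  then show ?thesis unfolding dinf_def by blast
qed

end


context SK begin

lemma AE_dpart:
  assumes A: "l0_partition P A" and B: "\<And>k. l0_partition P (B k)"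
    and h: "\<And>k j. AE w in P. w \<in> A k \<longrightarrow> w \<in> B k j \<longrightarrow> Q w"
  shows "AE w in P. Q w"
proof (rule AE_partition[OF A])
  fix k
  show "AE w in P. w \<in> A k \<longrightarrow> Q w"
  proof (rule AE_partition[OF B[of k]])
    fix j show "AE w in P. w \<in> B k j \<longrightarrow> w \<in> A k \<longrightarrow> Q w" using h[of k j] by eventually_elim auto
  qed
qed

lemma stF_ae:
  assumes Y: "Y \<subseteq> F" and y: "y \<in> stF P Y"
  shows "\<exists>g'\<in>F. \<forall>x\<in>K. eqae P (y x) (g' x)"
proof -
  obtain B zs where B: "l0_partition P B" and zs: "\<And>j. zs j \<in> Y" and yd: "y = fcc B zs"
    using y unfolding stF_def by blast
  obtain g where g: "g \<in> F" "\<forall>x\<in>K. \<forall>j. AE w in P. w \<in> B j \<longrightarrow> g x w = zs j x w"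
    using F_glue_part[OF B, of zs] zs Y by blast
  have "eqae P (y x) (g x)" if x: "x \<in> K" for x
    unfolding eqae_def
  proof (rule AE_partition[OF B])
    fix j
    have a: "AE w in P. w \<in> B j \<longrightarrow> g x w = zs j x w" using g(2) x by blast
    show "AE w in P. w \<in> B j \<longrightarrow> y x w = g x w"
      using a by eventually_elim (simp add: yd fcc_at[OF B])
  qed
  then show ?thesis using g(1) by blast
qed

lemma N_decomp:
  assumes N: "stable_finite P F N"
  shows "\<exists>A Y. l0_partition P A \<and> (\<forall>k. finite (Y k) \<and> Y k \<noteq> {} \<and> Y k \<subseteq> F) \<and>
    (\<forall>g\<in>N. \<exists>B zs. (\<forall>k. l0_partition P (B k)) \<and> (\<forall>k j. zs k j \<in> Y k) \<and>
        (\<forall>x k j w. w \<in> A k \<longrightarrow> w \<in> B k j \<longrightarrow> g x w = zs k j x w)) \<and>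
    (\<forall>g\<in>N. \<exists>g'\<in>F. \<forall>x\<in>K. eqae P (g x) (g' x))"
proof -
  obtain A Y where A: "l0_partition P A" and Y: "\<forall>k. finite (Y k) \<and> Y k \<noteq> {} \<and> Y k \<subseteq> F"
    and Nd: "N = {fcc A ys | ys. \<forall>k. ys k \<in> stF P (Y k)}"
    using N unfolding stable_finite_def by blast
  have dec: "\<exists>B zs. (\<forall>k. l0_partition P (B k)) \<and> (\<forall>k j. zs k j \<in> Y k) \<and>
        (\<forall>x k j w. w \<in> A k \<longrightarrow> w \<in> B k j \<longrightarrow> g x w = zs k j x w)" if g: "g \<in> N" for g
  proof -
    obtain ys where ys: "\<forall>k. ys k \<in> stF P (Y k)" and gd: "g = fcc A ys" using g Nd by blast
    have "\<forall>k. \<exists>Bz. l0_partition P (fst Bz) \<and> (\<forall>j. snd Bz j \<in> Y k) \<and> ys k = fcc (fst Bz) (snd Bz)"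
      using ys unfolding stF_def by fastforce
    then obtain Bz where Bz: "\<forall>k. l0_partition P (fst (Bz k)) \<and> (\<forall>j. snd (Bz k) j \<in> Y k) \<and> ys k = fcc (fst (Bz k)) (snd (Bz k))"
      by (rule choice[THEN exE])
    show ?thesis
    proof (intro exI[of _ "\<lambda>k. fst (Bz k)"] exI[of _ "\<lambda>k. snd (Bz k)"] conjI allI impI)
      show "l0_partition P (fst (Bz k))" for k using Bz by blast
      show "snd (Bz k) j \<in> Y k" for k j using Bz by blast
      fix x k j w assume w: "w \<in> A k" "w \<in> fst (Bz k) j"
      have "g x w = ys k x w" unfolding gd using fcc_at[OF A w(1)] .
      also have "\<dots> = snd (Bz k) j x w"
      proof -
        have "l0_partition P (fst (Bz k))" "ys k = fcc (fst (Bz k)) (snd (Bz k))" using Bz by auto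
        then show ?thesis using fcc_at[where A="fst (Bz k)" and w=w and k=j and fs="snd (Bz k)" and x=x] w(2) by simp
      qed
      finally show "g x w = snd (Bz k) j x w" .
    qed
  qed
  have ae: "\<exists>g'\<in>F. \<forall>x\<in>K. eqae P (g x) (g' x)" if g: "g \<in> N" for g
  proof -
    obtain ys where ys: "\<forall>k. ys k \<in> stF P (Y k)" and gd: "g = fcc A ys" using g Nd by blast
    have "\<forall>k. \<exists>g'. g' \<in> F \<and> (\<forall>x\<in>K. eqae P (ys k x) (g' x))" using stF_ae Y ys by blast
    then obtain gs where gs: "\<forall>k. gs k \<in> F \<and> (\<forall>x\<in>K. eqae P (ys k x) (gs k x))"
      by (rule choice[THEN exE])
    obtain g' where g': "g' \<in> F" "\<forall>x\<in>K. \<forall>k. AE w in P. w \<in> A k \<longrightarrow> g' x w = gs k x w"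
      using F_glue_part[OF A, of gs] gs by blast
    have "eqae P (g x) (g' x)" if x: "x \<in> K" for x
      unfolding eqae_def
    proof (rule AE_partition[OF A])
      fix k
      have e1: "AE w in P. ys k x w = gs k x w" using gs x unfolding eqae_def by blast
      have e2: "AE w in P. w \<in> A k \<longrightarrow> g' x w = gs k x w" using g'(2) x by blast
      show "AE w in P. w \<in> A k \<longrightarrow> g x w = g' x w"
        using e1 e2 by eventually_elim (auto simp: gd fcc_at[OF A])
    qed
    then show ?thesis using g'(1) by blast
  qed
  show ?thesis
  proof (intro exI[of _ A] exI[of _ Y] conjI ballI)
    show "l0_partition P A" by (rule A)
    show "\<forall>k. finite (Y k) \<and> Y k \<noteq> {} \<and> Y k \<subseteq> F" by (rule Y)
  qed (rule dec, assumption, rule ae, assumption)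
qed

lemma tb_imp_pb:
  assumes tb: "stable_totally_bounded P X F"
  shows "pointwise_bounded P X F"
  unfolding pointwise_bounded_def
proof
  fix x assume x: "x \<in> K"
  have one: "(\<lambda>w. 1::real) \<in> L0pp P" unfolding L0pp_def L0_def by simp
  obtain N where N: "stable_finite P F N" and cov: "\<forall>f\<in>F. \<exists>g\<in>N. ltae P (dinf P X f g) (\<lambda>w. 1)"
    using tb one unfolding stable_totally_bounded_def by blast
  obtain A Y where A: "l0_partition P A" and Y: "\<forall>k. finite (Y k) \<and> Y k \<noteq> {} \<and> Y k \<subseteq> F"
    and dec: "\<forall>g\<in>N. \<exists>B zs. (\<forall>k. l0_partition P (B k)) \<and> (\<forall>k j. zs k j \<in> Y k) \<and>
        (\<forall>x k j w. w \<in> A k \<longrightarrow> w \<in> B k j \<longrightarrow> g x w = zs k j x w)"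
    and ae: "\<forall>g\<in>N. \<exists>g'\<in>F. \<forall>x\<in>K. eqae P (g x) (g' x)"
    using N_decomp[OF N] apply - apply (elim exE conjE) apply (rule that) by assumption+
  define R where "R = (\<lambda>w. l0cc A (\<lambda>k w. Max ((\<lambda>h. \<bar>h x w\<bar>) ` Y k)) w + 1)"
  have Rm: "R \<in> L0 P" unfolding R_def L0_def
  proof (intro borel_measurable_add borel_measurable_const l0cc_measurable[OF A])
    fix k show "(\<lambda>w. Max ((\<lambda>h. \<bar>h x w\<bar>) ` Y k)) \<in> borel_measurable P"
    proof (rule borel_measurable_Max)
      show "finite (Y k)" using Y by blast
      fix h assume "h \<in> Y k"
      then have "h x \<in> borel_measurable P" using Y F_meas[OF _ x] by blast
      then show "(\<lambda>w. \<bar>h x w\<bar>) \<in> borel_measurable P" by measurable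
    qed
  qed
  have "\<forall>f\<in>F. leae P (\<lambda>w. \<bar>f x w\<bar>) R"
  proof
    fix f assume f: "f \<in> F"
    obtain g where g: "g \<in> N" "ltae P (dinf P X f g) (\<lambda>w. 1)" using cov f by blast
    obtain g' where g': "g' \<in> F" "\<forall>x\<in>K. eqae P (g x) (g' x)" using ae g(1) by blast
    obtain B zs where B: "\<forall>k. l0_partition P (B k)" "\<forall>k j. zs k j \<in> Y k"
        "\<forall>x k j w. w \<in> A k \<longrightarrow> w \<in> B k j \<longrightarrow> g x w = zs k j x w"
      using dec g(1) by blast
    have le: "leae P (\<lambda>w. \<bar>f x w - g x w\<bar>) (dinf P X f g)" using dinf_max[OF f g'(1) g'(2)] x by blast
    show "leae P (\<lambda>w. \<bar>f x w\<bar>) R" unfolding leae_def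
    proof (rule AE_dpart[OF A, of B])
      show "l0_partition P (B k)" for k using B by blast
      fix k j
      show "AE w in P. w \<in> A k \<longrightarrow> w \<in> B k j \<longrightarrow> \<bar>f x w\<bar> \<le> R w"
        using le g(2) unfolding leae_def ltae_def
      proof eventually_elim
        case (elim w)
        show ?case
        proof (intro impI)
          assume w: "w \<in> A k" "w \<in> B k j"
          have "R w = Max ((\<lambda>h. \<bar>h x w\<bar>) ` Y k) + 1" unfolding R_def using l0cc_at[OF A w(1)] by simp
          moreover have "\<bar>zs k j x w\<bar> \<le> Max ((\<lambda>h. \<bar>h x w\<bar>) ` Y k)"
            using B(2) Y by (intro Max_ge) auto
          moreover have "g x w = zs k j x w" using B(3) w by blast
          ultimately show "\<bar>f x w\<bar> \<le> R w" using elim by linarith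
        qed
      qed
    qed
  qed
  then show "\<exists>rx\<in>L0 P. \<forall>f\<in>F. leae P (\<lambda>w. \<bar>f x w\<bar>) rx" using Rm by blast
qed

end


context SK begin

lemma tb_imp_eq:
  assumes tb: "stable_totally_bounded P X F"
  shows "stable_equicontinuous P X F"
  unfolding stable_equicontinuous_def
proof (intro ballI)
  fix x r assume x: "x \<in> K" and r: "r \<in> L0pp P"
  define r3 where "r3 = (\<lambda>w. r w / 3)"
  have r3: "r3 \<in> L0pp P" using r unfolding r3_def L0pp_def L0_def
    by (auto elim!: AE_mp intro!: AE_I2)
  obtain N where N: "stable_finite P F N" and cov: "\<forall>f\<in>F. \<exists>g\<in>N. ltae P (dinf P X f g) r3"
    using tb r3 unfolding stable_totally_bounded_def by blast
  obtain A Y where A: "l0_partition P A" and Y: "\<forall>k. finite (Y k) \<and> Y k \<noteq> {} \<and> Y k \<subseteq> F"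
    and dec: "\<forall>g\<in>N. \<exists>B zs. (\<forall>k. l0_partition P (B k)) \<and> (\<forall>k j. zs k j \<in> Y k) \<and>
        (\<forall>x k j w. w \<in> A k \<longrightarrow> w \<in> B k j \<longrightarrow> g x w = zs k j x w)"
    and ae: "\<forall>g\<in>N. \<exists>g'\<in>F. \<forall>x\<in>K. eqae P (g x) (g' x)"
    using N_decomp[OF N] apply - apply (elim exE conjE) apply (rule that) by assumption+
  define Nb where "Nb = (\<lambda>h. SOME U. openin X U \<and> x \<in> U \<and> (\<forall>y\<in>U. y \<in> K \<and> (AE w in P. \<bar>h y w - h x w\<bar> < r3 w)))"
  have Nb: "openin X (Nb h) \<and> x \<in> Nb h \<and> (\<forall>y\<in>Nb h. y \<in> K \<and> (AE w in P. \<bar>h y w - h x w\<bar> < r3 w))"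
    if h: "h \<in> F" for h
    unfolding Nb_def by (rule someI_ex) (rule F_near[OF h x r3])
  define Ok where "Ok = (\<lambda>k. \<Inter> (Nb ` Y k))"
  have Ok: "openin X (Ok k)" "x \<in> Ok k" for k
  proof -
    show "openin X (Ok k)" unfolding Ok_def
      by (rule openin_Inter) (use Y Nb in auto)
    show "x \<in> Ok k" unfolding Ok_def using Y Nb by blast
  qed
  have "\<forall>k. \<exists>V. V \<in> BB \<and> x \<in> V \<and> V \<subseteq> Ok k" using BB_base[OF Ok(1) Ok(2)] by blast
  then obtain V where V0: "\<forall>k. V k \<in> BB \<and> x \<in> V k \<and> V k \<subseteq> Ok k" by (rule choice[THEN exE])
  then have V: "\<And>k. V k \<in> BB" "\<And>k. x \<in> V k" "\<And>k. V k \<subseteq> Ok k" by auto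
  define U where "U = cc_sets smul A V"
  have UB: "U \<in> BB" unfolding U_def using BB(2) A V(1) unfolding stable_coll_def by blast
  have Uo: "openin X U" using BB_open[OF UB] .
  have xU: "x \<in> U" unfolding U_def cc_sets_def using mcc_const[OF A, of x] V(2) by force
  have UK: "U \<subseteq> K" using openin_subset[OF Uo] .
  have VK: "V k \<subseteq> K" for k using openin_subset[OF BB_open[OF V(1)]] .
  have "\<forall>y\<in>U. \<forall>f\<in>F. leae P (\<lambda>w. \<bar>f x w - f y w\<bar>) r"
  proof (intro ballI)
    fix y f assume y: "y \<in> U" and f: "f \<in> F"
    obtain ys where yd: "y = mcc smul A ys" and ys: "\<And>k. ys k \<in> V k" using y unfolding U_def cc_sets_def by blast
    have yK: "y \<in> K" using y UK by blast
    have ysK: "ys k \<in> K" for k using ys VK by blast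
    obtain g where g: "g \<in> N" "ltae P (dinf P X f g) r3" using cov f by blast
    obtain g' where g': "g' \<in> F" "\<forall>x\<in>K. eqae P (g x) (g' x)" using ae g(1) by blast
    obtain B zs where B: "\<forall>k. l0_partition P (B k)" "\<forall>k j. zs k j \<in> Y k"
        "\<forall>x k j w. w \<in> A k \<longrightarrow> w \<in> B k j \<longrightarrow> g x w = zs k j x w"
      using dec g(1) by blast
    have dm: "\<forall>y\<in>K. leae P (\<lambda>w. \<bar>f y w - g y w\<bar>) (dinf P X f g)" using dinf_max[OF f g'(1) g'(2)] by blast
    have gg: "AE w in P. \<bar>g x w - g y w\<bar> < r3 w"
    proof (rule AE_dpart[OF A, of B])
      show "l0_partition P (B k)" for k using B by blast
      fix k j
      have hF: "zs k j \<in> F" using B(2) Y by blast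
      have e1: "AE w in P. w \<in> A k \<longrightarrow> zs k j y w = zs k j (ys k) w"
        by (rule F_loc[OF hF yK ysK[of k] partition_sets[OF A]]) (unfold yd, rule mcc_loc[OF A])
      have "ys k \<in> Nb (zs k j)" using ys[of k] V(3)[of k] B(2) unfolding Ok_def by blast
      then have e2: "AE w in P. \<bar>zs k j (ys k) w - zs k j x w\<bar> < r3 w" using Nb[OF hF] by blast
      show "AE w in P. w \<in> A k \<longrightarrow> w \<in> B k j \<longrightarrow> \<bar>g x w - g y w\<bar> < r3 w"
        using e1 e2
      proof eventually_elim
        case (elim w)
        show ?case
        proof (intro impI)
          assume w: "w \<in> A k" "w \<in> B k j"
          have "g x w = zs k j x w" "g y w = zs k j y w" using B(3) w by blast+
          then show "\<bar>g x w - g y w\<bar> < r3 w" using elim w by (simp add: abs_minus_commute)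
        qed
      qed
    qed
    have d1: "AE w in P. \<bar>f x w - g x w\<bar> \<le> dinf P X f g w" using dm x unfolding leae_def by blast
    have d2: "AE w in P. \<bar>f y w - g y w\<bar> \<le> dinf P X f g w" using dm yK unfolding leae_def by blast
    have d3: "AE w in P. dinf P X f g w < r3 w" using g(2) unfolding ltae_def .
    show "leae P (\<lambda>w. \<bar>f x w - f y w\<bar>) r" unfolding leae_def using d1 d2 d3 gg
    proof eventually_elim
      case (elim w)
      have "\<bar>f x w - f y w\<bar> \<le> \<bar>g x w - g y w\<bar> + \<bar>f x w - g x w\<bar> + \<bar>f y w - g y w\<bar>" by (rule abs3)
      then show ?case using elim unfolding r3_def by linarith
    qed
  qed
  then show "\<exists>V. (\<exists>U. openin X U \<and> x \<in> U \<and> U \<subseteq> V) \<and> V \<subseteq> K \<and>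
      (\<forall>y\<in>V. \<forall>f\<in>F. leae P (\<lambda>w. \<bar>f x w - f y w\<bar>) r)"
    using Uo xU UK by blast
qed

end


locale SKW = SK P smul X F for P :: "'w measure" and smul :: "('w \<Rightarrow> real) \<Rightarrow> 'e::ab_group_add \<Rightarrow> 'e"
  and X F +
  fixes W :: "'e \<Rightarrow> 'e set"
  assumes WB: "x \<in> topspace X \<Longrightarrow> W x \<in> BB" and Wx: "x \<in> topspace X \<Longrightarrow> x \<in> W x"
begin

lemma W_stable: "x \<in> K \<Longrightarrow> stable_set P smul (W x)" using BB_stable[OF WB] .
lemma W_open: "x \<in> K \<Longrightarrow> openin X (W x)" using BB_open[OF WB] .
lemma W_K: "x \<in> K \<Longrightarrow> W x \<subseteq> K" using openin_subset[OF W_open] .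

definition Fam where "Fam x y = {S \<in> sets P. \<exists>u\<in>W x. loc S y u}"

lemma Fam_exh:
  assumes x: "x \<in> K"
  shows "\<exists>S\<in>Fam x y. \<forall>T\<in>Fam x y. AE w in P. w \<in> T \<longrightarrow> w \<in> S"
proof (rule exhaust)
  show "Fam x y \<subseteq> sets P" unfolding Fam_def by blast
  show "Fam x y \<noteq> {}" unfolding Fam_def loc_def using Wx[OF x] by (intro ex_in_conv[THEN iffD1] exI[of _ "{}"]) auto
  fix S :: "nat \<Rightarrow> 'w set" assume S: "\<And>n. S n \<in> Fam x y"
  have "\<forall>n. \<exists>u. u \<in> W x \<and> loc (S n) y u" using S unfolding Fam_def by blast
  then obtain u where u: "\<forall>n. u n \<in> W x \<and> loc (S n) y (u n)" by (rule choice[THEN exE])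
  have Ss: "\<And>n. S n \<in> sets P" using S unfolding Fam_def by blast
  obtain z where z: "z \<in> W x" "\<forall>n. loc (disjointed S n) z (u n)"
    using glue[OF W_stable[OF x], of S u] Ss u by blast
  have "loc (disjointed S n) y z" for n
  proof -
    have "loc (disjointed S n) y (u n)"
      by (rule loc_restrict[of "S n"]) (use u Ss disj_sets[of S] disjointed_subset[of S n] in auto)
    then show ?thesis using z(2) loc_trans loc_sym by blast
  qed
  then have "loc (\<Union>n. disjointed S n) y z" by (intro loc_Union) (use disj_sets[of S] Ss in auto)
  then have "loc (\<Union>n. S n) y z" by (simp add: UN_disjointed_eq)
  moreover have "(\<Union>n. S n) \<in> sets P" using Ss by blast
  ultimately show "(\<Union>n. S n) \<in> Fam x y" unfolding Fam_def using z(1) by blast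
qed

definition cv where "cv x y = (SOME S. S \<in> Fam x y \<and> (\<forall>T\<in>Fam x y. AE w in P. w \<in> T \<longrightarrow> w \<in> S))"

lemma cv_prop:
  assumes x: "x \<in> K"
  shows "cv x y \<in> Fam x y \<and> (\<forall>T\<in>Fam x y. AE w in P. w \<in> T \<longrightarrow> w \<in> cv x y)"
proof -
  obtain S where "S \<in> Fam x y \<and> (\<forall>T\<in>Fam x y. AE w in P. w \<in> T \<longrightarrow> w \<in> S)"
    using Fam_exh[OF x, of y] by blast
  then show ?thesis unfolding cv_def by (rule someI)
qed

lemma cv_sets: "x \<in> K \<Longrightarrow> cv x y \<in> sets P"
proof -
  assume x: "x \<in> K"
  have "cv x y \<in> Fam x y" using cv_prop[OF x] by (rule conjunct1)
  then show ?thesis unfolding Fam_def by simp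
qed
lemma cv_wit: "x \<in> K \<Longrightarrow> \<exists>u\<in>W x. loc (cv x y) y u"
proof -
  assume x: "x \<in> K"
  have "cv x y \<in> Fam x y" using cv_prop[OF x] by (rule conjunct1)
  then show ?thesis unfolding Fam_def by simp
qed
lemma cv_max: "x \<in> K \<Longrightarrow> S \<in> sets P \<Longrightarrow> u \<in> W x \<Longrightarrow> loc S y u \<Longrightarrow> AE w in P. w \<in> S \<longrightarrow> w \<in> cv x y"
proof -
  assume x: "x \<in> K" and S: "S \<in> sets P" "u \<in> W x" "loc S y u"
  have "S \<in> Fam x y" unfolding Fam_def using S by blast
  moreover have "\<forall>T\<in>Fam x y. AE w in P. w \<in> T \<longrightarrow> w \<in> cv x y" using cv_prop[OF x] by (rule conjunct2)
  ultimately show ?thesis by blast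
qed

lemma cv_full: "x \<in> K \<Longrightarrow> y \<in> W x \<Longrightarrow> AE w in P. w \<in> cv x y"
proof -
  assume x: "x \<in> K" and y: "y \<in> W x"
  have "AE w in P. w \<in> space P \<longrightarrow> w \<in> cv x y" by (rule cv_max[OF x _ y]) auto
  then show ?thesis using AE_space by eventually_elim blast
qed

lemma cv_local:
  assumes x: "x \<in> K" and D: "D \<in> sets P" and l: "loc D z y'"
  shows "AE w in P. w \<in> D \<longrightarrow> w \<in> cv x z \<longrightarrow> w \<in> cv x y'"
proof -
  obtain u where u: "u \<in> W x" "loc (cv x z) z u" using cv_wit[OF x] by blast
  have Ds: "D \<inter> cv x z \<in> sets P" using D cv_sets[OF x] by blast
  have "loc (D \<inter> cv x z) y' z" by (rule loc_restrict[OF loc_sym[OF l] D Ds]) blast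
  moreover have "loc (D \<inter> cv x z) z u" by (rule loc_restrict[OF u(2) cv_sets[OF x] Ds]) blast
  ultimately have "loc (D \<inter> cv x z) y' u" by (rule loc_trans)
  from cv_max[OF x Ds u(1) this] show ?thesis by (rule AE_mp) (intro AE_I2, blast)
qed

definition cov where "cov A XX y w \<longleftrightarrow> (\<exists>k. w \<in> A k \<and> (\<exists>x\<in>XX k. w \<in> cv x y))"
definition valid where "valid A XX \<longleftrightarrow> l0_partition P A \<and> (\<forall>k. finite (XX k) \<and> XX k \<noteq> {} \<and> XX k \<subseteq> K)"

lemma cov_local:
  assumes v: "valid A XX" and D: "D \<in> sets P" and l: "loc D z y'"
  shows "AE w in P. w \<in> D \<longrightarrow> cov A XX z w \<longrightarrow> cov A XX y' w"
proof -
  have "AE w in P. \<forall>k. \<forall>x\<in>XX k. w \<in> D \<longrightarrow> w \<in> cv x z \<longrightarrow> w \<in> cv x y'"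
    unfolding AE_all_countable
  proof
    fix k
    have fin: "finite (XX k)" and sub: "XX k \<subseteq> K" using v unfolding valid_def by auto
    show "AE w in P. \<forall>x\<in>XX k. w \<in> D \<longrightarrow> w \<in> cv x z \<longrightarrow> w \<in> cv x y'"
      by (rule AE_finite_allI[OF fin]) (use cv_local[OF _ D l] sub in blast)
  qed
  then show ?thesis by (rule AE_mp) (rule AE_I2, unfold cov_def, blast)
qed

lemma cov_sets:
  assumes v: "valid A XX"
  shows "{w \<in> space P. cov A XX y w} \<in> sets P"
proof -
  have A: "l0_partition P A" and XX: "\<And>k. finite (XX k) \<and> XX k \<noteq> {} \<and> XX k \<subseteq> K" using v unfolding valid_def by auto
  have "{w \<in> space P. cov A XX y w} = (\<Union>k. A k \<inter> (\<Union>x\<in>XX k. cv x y))"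
    unfolding cov_def using partition_sub[OF A] by blast
  moreover have "(\<Union>k. A k \<inter> (\<Union>x\<in>XX k. cv x y)) \<in> sets P"
  proof -
    have "A k \<inter> (\<Union>x\<in>XX k. cv x y) \<in> sets P" for k
    proof -
      have "(\<Union>x\<in>XX k. cv x y) \<in> sets P"
        by (rule sets.finite_UN) (use XX cv_sets in auto)
      then show ?thesis using partition_sets[OF A] by blast
    qed
    then show ?thesis by blast
  qed
  ultimately show ?thesis by simp
qed

end


context SKW begin

definition rX :: "(nat \<Rightarrow> nat \<Rightarrow> 'e set) \<Rightarrow> nat \<Rightarrow> 'e set" where
  "rX XXn m = XXn (fst (prod_decode m)) (snd (prod_decode m))"

lemma rX_enc[simp]: "rX XXn (prod_encode (n, k)) = XXn n k" unfolding rX_def by simp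
lemma rX_dec: "prod_decode m = (n, k) \<Longrightarrow> rX XXn m = XXn n k" unfolding rX_def by simp

definition ZZ where "ZZ E A XX = {y \<in> K. AE w in P. w \<in> E \<longrightarrow> \<not> cov A XX y w}"

lemma valid_refine:
  assumes D: "l0_partition P D" and v: "\<And>n. valid (AA n) (XXn n)"
  shows "valid (refine D AA) (rX XXn)"
  unfolding valid_def
proof (intro conjI allI)
  show "l0_partition P (refine D AA)" using refine_partition[OF D] v unfolding valid_def by blast
  fix m
  obtain n k where d: "prod_decode m = (n, k)" by (metis surj_pair)
  show "finite (rX XXn m)" "rX XXn m \<noteq> {}" "rX XXn m \<subseteq> K"
    using v[of n] unfolding rX_dec[OF d] valid_def by auto
qed

lemma cov_refine_iff:
  assumes D: "l0_partition P D" and v: "\<And>n. valid (AA n) (XXn n)" and w: "w \<in> D n"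
  shows "cov (refine D AA) (rX XXn) y w \<longleftrightarrow> cov (AA n) (XXn n) y w"
proof
  assume "cov (refine D AA) (rX XXn) y w"
  then obtain m x where m0: "w \<in> refine D AA m" "x \<in> rX XXn m" "w \<in> cv x y"
    unfolding cov_def by blast
  obtain n' k where d: "prod_decode m = (n', k)" by (metis surj_pair)
  have m: "w \<in> refine D AA m" "x \<in> XXn n' k" "w \<in> cv x y" using m0 rX_dec[OF d] by auto
  have "w \<in> D n'" "w \<in> AA n' k" using refine_at[OF m(1) d] by auto
  then have "n' = n" using partition_unique[OF D _ w] by blast
  then show "cov (AA n) (XXn n) y w" unfolding cov_def using m \<open>w \<in> AA n' k\<close> by blast
next
  assume "cov (AA n) (XXn n) y w"
  then obtain k x where k: "w \<in> AA n k" "x \<in> XXn n k" "w \<in> cv x y" unfolding cov_def by blast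
  show "cov (refine D AA) (rX XXn) y w"
    unfolding cov_def
    by (rule exI[of _ "prod_encode (n, k)"]) (use k w in \<open>auto simp: refine_enc\<close>)
qed

lemma Z_mcc:
  assumes v: "valid A XX" and D: "l0_partition P D" and ys: "\<And>n. ys n \<in> ZZ E A XX"
  shows "mcc smul D ys \<in> ZZ E A XX"
proof -
  have ysK: "ys n \<in> K" for n using ys unfolding ZZ_def by blast
  have yK: "mcc smul D ys \<in> K" by (rule stable_set_mcc[OF K_stable D ysK])
  have "AE w in P. w \<in> E \<longrightarrow> \<not> cov A XX (mcc smul D ys) w"
  proof (rule AE_partition[OF D])
    fix n
    have e1: "AE w in P. w \<in> D n \<longrightarrow> cov A XX (mcc smul D ys) w \<longrightarrow> cov A XX (ys n) w"
      by (rule cov_local[OF v partition_sets[OF D] mcc_loc[OF D]])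
    have e2: "AE w in P. w \<in> E \<longrightarrow> \<not> cov A XX (ys n) w" using ys[of n] unfolding ZZ_def by blast
    show "AE w in P. w \<in> D n \<longrightarrow> w \<in> E \<longrightarrow> \<not> cov A XX (mcc smul D ys) w"
      using e1 e2 by eventually_elim blast
  qed
  then show ?thesis unfolding ZZ_def using yK by blast
qed

lemma Z_int:
  assumes v: "valid A XX" and v': "valid A' XX'"
  shows "\<exists>A'' XX''. valid A'' XX'' \<and> ZZ E A'' XX'' \<subseteq> ZZ E A XX \<inter> ZZ E A' XX'"
proof -
  have A: "l0_partition P A" and A': "l0_partition P A'" using v v' unfolding valid_def by auto
  define A'' where "A'' = refine A (\<lambda>_. A')"
  define XX'' where "XX'' = (\<lambda>m. case prod_decode m of (k, k') \<Rightarrow> XX k \<union> XX' k')"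
  have v'': "valid A'' XX''" unfolding valid_def A''_def XX''_def
  proof (intro conjI allI)
    show "l0_partition P (refine A (\<lambda>_. A'))" by (rule refine_partition[OF A A'])
    fix m
    obtain k k' where d: "prod_decode m = (k, k')" by (metis surj_pair)
    show "finite (case prod_decode m of (k, k') \<Rightarrow> XX k \<union> XX' k')" "(case prod_decode m of (k, k') \<Rightarrow> XX k \<union> XX' k') \<noteq> {}"
      "(case prod_decode m of (k, k') \<Rightarrow> XX k \<union> XX' k') \<subseteq> K"
      using v v' unfolding d valid_def by auto
  qed
  have c1: "cov A'' XX'' y w" if ww: "w \<in> space P" and cc: "cov A XX y w" for y w
  proof -
    obtain k x where k: "w \<in> A k" "x \<in> XX k" "w \<in> cv x y" using cc unfolding cov_def by blast
    obtain k' where k': "w \<in> A' k'" using partition_space[OF A' ww] by blast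
    show ?thesis unfolding cov_def
      by (rule exI[of _ "prod_encode (k, k')"]) (use k k' in \<open>auto simp: A''_def XX''_def refine_enc\<close>)
  qed
  have c2: "cov A'' XX'' y w" if ww: "w \<in> space P" and cc: "cov A' XX' y w" for y w
  proof -
    obtain k' x where k': "w \<in> A' k'" "x \<in> XX' k'" "w \<in> cv x y" using cc unfolding cov_def by blast
    obtain k where k: "w \<in> A k" using partition_space[OF A ww] by blast
    show ?thesis unfolding cov_def
      by (rule exI[of _ "prod_encode (k, k')"]) (use k k' in \<open>auto simp: A''_def XX''_def refine_enc\<close>)
  qed
  have "ZZ E A'' XX'' \<subseteq> ZZ E A XX \<inter> ZZ E A' XX'"
  proof
    fix y assume y: "y \<in> ZZ E A'' XX''"
    then have yK: "y \<in> K" and a: "AE w in P. w \<in> E \<longrightarrow> \<not> cov A'' XX'' y w" unfolding ZZ_def by auto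
    have "AE w in P. w \<in> E \<longrightarrow> \<not> cov A XX y w"
      using a AE_space by eventually_elim (use c1 in blast)
    moreover have "AE w in P. w \<in> E \<longrightarrow> \<not> cov A' XX' y w"
      using a AE_space by eventually_elim (use c2 in blast)
    ultimately show "y \<in> ZZ E A XX \<inter> ZZ E A' XX'" unfolding ZZ_def using yK by blast
  qed
  then show ?thesis using v'' by blast
qed

lemma Z_cc:
  assumes D: "l0_partition P D" and v: "\<And>n. valid (AA n) (XXn n)" and ne: "\<And>n. ZZ E (AA n) (XXn n) \<noteq> {}"
    and E: "E \<subseteq> space P"
  shows "cc_sets smul D (\<lambda>n. ZZ E (AA n) (XXn n)) = ZZ E (refine D AA) (rX XXn)"
    (is "?L = ZZ E ?A ?X")
proof
  have vA: "valid ?A ?X" by (rule valid_refine[of D AA XXn, OF D v])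
  show "?L \<subseteq> ZZ E ?A ?X"
  proof
    fix y assume "y \<in> ?L"
    then obtain ys where yd: "y = mcc smul D ys" and ys: "\<And>n. ys n \<in> ZZ E (AA n) (XXn n)"
      unfolding cc_sets_def by blast
    have ysK: "ys n \<in> K" for n using ys unfolding ZZ_def by blast
    have yK: "y \<in> K" unfolding yd by (rule stable_set_mcc[OF K_stable D ysK])
    have "AE w in P. w \<in> E \<longrightarrow> \<not> cov ?A ?X y w"
    proof (rule AE_partition[OF D])
      fix n
      have e1: "AE w in P. w \<in> D n \<longrightarrow> cov (AA n) (XXn n) y w \<longrightarrow> cov (AA n) (XXn n) (ys n) w"
        unfolding yd by (rule cov_local[OF v[of n] partition_sets[OF D] mcc_loc[OF D]])
      have e2: "AE w in P. w \<in> E \<longrightarrow> \<not> cov (AA n) (XXn n) (ys n) w" using ys[of n] unfolding ZZ_def by blast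
      show "AE w in P. w \<in> D n \<longrightarrow> w \<in> E \<longrightarrow> \<not> cov ?A ?X y w"
        using e1 e2
      proof eventually_elim
        case (elim w)
        show ?case
        proof (intro impI)
          assume wD: "w \<in> D n" and "w \<in> E"
          then show "\<not> cov ?A ?X y w" using cov_refine_iff[of D AA XXn, OF D v wD] elim by blast
        qed
      qed
    qed
    then show "y \<in> ZZ E ?A ?X" unfolding ZZ_def using yK by blast
  qed
  show "ZZ E ?A ?X \<subseteq> ?L"
  proof
    fix y assume y: "y \<in> ZZ E ?A ?X"
    then have yK: "y \<in> K" and ay: "AE w in P. w \<in> E \<longrightarrow> \<not> cov ?A ?X y w" unfolding ZZ_def by auto
    have "\<forall>n. \<exists>z. z \<in> ZZ E (AA n) (XXn n)" using ne by blast
    then obtain z where z: "\<forall>n. z n \<in> ZZ E (AA n) (XXn n)" by (rule choice[THEN exE])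
    have zK: "z n \<in> K" for n using z unfolding ZZ_def by blast
    have "\<forall>n. \<exists>u. u \<in> K \<and> loc (D n) u y \<and> loc (space P - D n) u (z n)"
      using glue2[OF K_stable partition_sets[OF D] yK zK] by blast
    then obtain ys where ys0: "\<forall>n. ys n \<in> K \<and> loc (D n) (ys n) y \<and> loc (space P - D n) (ys n) (z n)"
      by (rule choice[THEN exE])
    then have ys: "\<And>n. ys n \<in> K" "\<And>n. loc (D n) (ys n) y" "\<And>n. loc (space P - D n) (ys n) (z n)" by auto
    have "ys n \<in> ZZ E (AA n) (XXn n)" for n
    proof -
      have Dn: "D n \<in> sets P" using partition_sets[OF D] .
      have e1: "AE w in P. w \<in> D n \<longrightarrow> cov (AA n) (XXn n) (ys n) w \<longrightarrow> cov (AA n) (XXn n) y w"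
        by (rule cov_local[OF v[of n] Dn ys(2)])
      have e2: "AE w in P. w \<in> space P - D n \<longrightarrow> cov (AA n) (XXn n) (ys n) w \<longrightarrow> cov (AA n) (XXn n) (z n) w"
        by (rule cov_local[OF v[of n] _ ys(3)]) (use Dn in auto)
      have e3: "AE w in P. w \<in> E \<longrightarrow> \<not> cov (AA n) (XXn n) (z n) w" using z unfolding ZZ_def by blast
      have "AE w in P. w \<in> E \<longrightarrow> \<not> cov (AA n) (XXn n) (ys n) w"
        using e1 e2 e3 ay AE_space
      proof eventually_elim
        case (elim w)
        show ?case
        proof (intro impI notI)
          assume wE: "w \<in> E" and c: "cov (AA n) (XXn n) (ys n) w"
          show False
          proof (cases "w \<in> D n")
            case True
            then have "cov (AA n) (XXn n) y w" using elim c by blast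
            then have "cov ?A ?X y w" using cov_refine_iff[of D AA XXn, OF D v True] by blast
            then show False using elim wE by blast
          next
            case False
            then show False using elim c wE by blast
          qed
        qed
      qed
      then show ?thesis unfolding ZZ_def using ys(1) by blast
    qed
    moreover have "mcc smul D ys = y" by (rule mcc_unique[OF D]) (rule loc_sym[OF ys(2)])
    ultimately show "y \<in> ?L" unfolding cc_sets_def by blast
  qed
qed

end


context SKW begin

lemma valid0: "x0 \<in> K \<Longrightarrow> valid (part2 P (space P)) (\<lambda>k. {x0})"
  unfolding valid_def using part2_partition[of "space P" P] by auto

definition S1 where "S1 = {S \<in> sets P. \<exists>A XX. valid A XX \<and> (\<forall>y\<in>K. AE w in P. w \<in> S \<longrightarrow> cov A XX y w)}"

lemma S1_union:
  fixes S :: "nat \<Rightarrow> 'w set"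
  assumes S: "\<And>n. S n \<in> S1"
  shows "(\<Union>n. S n) \<in> S1"
proof -
  have "\<forall>n. \<exists>p. valid (fst p) (snd p) \<and> (\<forall>y\<in>K. AE w in P. w \<in> S n \<longrightarrow> cov (fst p) (snd p) y w)"
  proof
    fix n
    obtain A XX where "valid A XX" "\<forall>y\<in>K. AE w in P. w \<in> S n \<longrightarrow> cov A XX y w"
      using S[of n] unfolding S1_def by blast
    then show "\<exists>p. valid (fst p) (snd p) \<and> (\<forall>y\<in>K. AE w in P. w \<in> S n \<longrightarrow> cov (fst p) (snd p) y w)"
      by (intro exI[of _ "(A, XX)"]) simp
  qed
  then obtain p where p: "\<forall>n. valid (fst (p n)) (snd (p n)) \<and> (\<forall>y\<in>K. AE w in P. w \<in> S n \<longrightarrow> cov (fst (p n)) (snd (p n)) y w)"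
    by (rule choice[THEN exE])
  define AA where "AA = (\<lambda>n. fst (p (n - 1)))"
  define XXn where "XXn = (\<lambda>n. snd (p (n - 1)))"
  have v: "valid (AA n) (XXn n)" for n unfolding AA_def XXn_def using p by blast
  have Ss: "S n \<in> sets P" for n using S unfolding S1_def by blast
  have D: "l0_partition P (dpart S)" by (rule dpart_partition[of S, OF Ss])
  have vA: "valid (refine (dpart S) AA) (rX XXn)" by (rule valid_refine[of "dpart S" AA XXn, OF D v])
  have "\<forall>y\<in>K. AE w in P. w \<in> (\<Union>n. S n) \<longrightarrow> cov (refine (dpart S) AA) (rX XXn) y w"
  proof
    fix y assume y: "y \<in> K"
    have "\<forall>n. AE w in P. w \<in> S n \<longrightarrow> cov (fst (p n)) (snd (p n)) y w"
    proof
      fix n show "AE w in P. w \<in> S n \<longrightarrow> cov (fst (p n)) (snd (p n)) y w" using p y by blast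
    qed
    then have "AE w in P. \<forall>n. w \<in> S n \<longrightarrow> cov (fst (p n)) (snd (p n)) y w"
      unfolding AE_all_countable .
    then show "AE w in P. w \<in> (\<Union>n. S n) \<longrightarrow> cov (refine (dpart S) AA) (rX XXn) y w"
    proof (rule AE_mp, intro AE_I2 impI)
      fix w assume h: "\<forall>n. w \<in> S n \<longrightarrow> cov (fst (p n)) (snd (p n)) y w" and w: "w \<in> (\<Union>n. S n)"
      have "w \<in> (\<Union>n. disjointed S n)" using w by (simp add: UN_disjointed_eq)
      then obtain n where wn: "w \<in> disjointed S n" by blast
      have wD: "w \<in> dpart S (Suc n)" unfolding dpart_Suc using wn .
      have "w \<in> S n" using wn disjointed_subset[of S n] by blast
      then have "cov (AA (Suc n)) (XXn (Suc n)) y w" using h unfolding AA_def XXn_def by simp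
      then show "cov (refine (dpart S) AA) (rX XXn) y w"
        using cov_refine_iff[of "dpart S" AA XXn, OF D v wD] by blast
    qed
  qed
  moreover have "(\<Union>n. S n) \<in> sets P" using Ss by blast
  ultimately show ?thesis unfolding S1_def using vA by blast
qed

lemma Z_nonempty:
  assumes Sst: "Sst \<in> sets P" and smax: "\<forall>T\<in>S1. AE w in P. w \<in> T \<longrightarrow> w \<in> Sst"
    and v: "valid A XX" and K0: "x0 \<in> K"
  shows "\<exists>y\<in>K. AE w in P. w \<in> space P - Sst \<longrightarrow> \<not> cov A XX y w"
proof -
  define E where "E = space P - Sst"
  have Es: "E \<in> sets P" unfolding E_def using Sst by blast
  define TT where "TT = {T \<in> sets P. T \<subseteq> E \<and> (\<exists>y\<in>K. AE w in P. w \<in> T \<longrightarrow> \<not> cov A XX y w)}"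
  have "\<exists>T\<in>TT. \<forall>T'\<in>TT. AE w in P. w \<in> T' \<longrightarrow> w \<in> T"
  proof (rule exhaust)
    show "TT \<subseteq> sets P" unfolding TT_def by blast
    have "{} \<in> TT" unfolding TT_def using K0 by (auto intro: AE_I2)
    then show "TT \<noteq> {}" by blast
    fix T :: "nat \<Rightarrow> 'w set" assume T: "\<And>n. T n \<in> TT"
    have Ts: "T n \<in> sets P" for n using T unfolding TT_def by blast
    have "\<forall>n. \<exists>y. y \<in> K \<and> (AE w in P. w \<in> T n \<longrightarrow> \<not> cov A XX y w)" using T unfolding TT_def by blast
    then obtain ys where ys0: "\<forall>n. ys n \<in> K \<and> (AE w in P. w \<in> T n \<longrightarrow> \<not> cov A XX (ys n) w)"
      by (rule choice[THEN exE])
    have ysK: "\<And>n. ys n \<in> K" using ys0 by blast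
    obtain z where z: "z \<in> K" "\<forall>n. loc (disjointed T n) z (ys n)"
      using glue[where Q=K and T=T and a=ys, OF K_stable Ts ysK] by blast
    have "AE w in P. \<forall>n. (w \<in> disjointed T n \<longrightarrow> cov A XX z w \<longrightarrow> cov A XX (ys n) w) \<and>
        (w \<in> T n \<longrightarrow> \<not> cov A XX (ys n) w)"
      unfolding AE_all_countable
    proof
      fix n
      have "AE w in P. w \<in> disjointed T n \<longrightarrow> cov A XX z w \<longrightarrow> cov A XX (ys n) w"
        by (rule cov_local[OF v disj_sets[of T, OF Ts]]) (use z in blast)
      moreover have "AE w in P. w \<in> T n \<longrightarrow> \<not> cov A XX (ys n) w" using ys0 by blast
      ultimately show "AE w in P. (w \<in> disjointed T n \<longrightarrow> cov A XX z w \<longrightarrow> cov A XX (ys n) w) \<and>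
        (w \<in> T n \<longrightarrow> \<not> cov A XX (ys n) w)" by eventually_elim blast
    qed
    then have "AE w in P. w \<in> (\<Union>n. T n) \<longrightarrow> \<not> cov A XX z w"
    proof (rule AE_mp, intro AE_I2 impI notI)
      fix w assume h: "\<forall>n. (w \<in> disjointed T n \<longrightarrow> cov A XX z w \<longrightarrow> cov A XX (ys n) w) \<and>
        (w \<in> T n \<longrightarrow> \<not> cov A XX (ys n) w)" and w: "w \<in> (\<Union>n. T n)" and c: "cov A XX z w"
      have "w \<in> (\<Union>n. disjointed T n)" using w by (simp add: UN_disjointed_eq)
      then obtain n where wn: "w \<in> disjointed T n" by blast
      then show False using h c disjointed_subset[of T n] by blast
    qed
    moreover have "(\<Union>n. T n) \<in> sets P" using Ts by blast
    moreover have "(\<Union>n. T n) \<subseteq> E" using T unfolding TT_def by blast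
    ultimately show "(\<Union>n. T n) \<in> TT" unfolding TT_def using z(1) by blast
  qed
  then obtain Tst where Tst: "Tst \<in> TT" "\<forall>T'\<in>TT. AE w in P. w \<in> T' \<longrightarrow> w \<in> Tst" by blast
  obtain yst where yst: "yst \<in> K" "AE w in P. w \<in> Tst \<longrightarrow> \<not> cov A XX yst w"
    using Tst(1) unfolding TT_def by blast
  have Tsts: "Tst \<in> sets P" using Tst(1) unfolding TT_def by blast
  have full: "AE w in P. w \<in> E \<longrightarrow> w \<in> Tst"
  proof (rule ccontr)
    assume nfull: "\<not> (AE w in P. w \<in> E \<longrightarrow> w \<in> Tst)"
    define G0 where "G0 = E - Tst"
    have G0s: "G0 \<in> sets P" unfolding G0_def using Es Tsts by blast
    show False
    proof (cases "\<forall>y\<in>K. AE w in P. w \<in> G0 \<longrightarrow> cov A XX y w")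
      case True
      then have "G0 \<in> S1" unfolding S1_def using G0s v by blast
      then have "AE w in P. w \<in> G0 \<longrightarrow> w \<in> Sst" using smax by blast
      then have "AE w in P. w \<in> E \<longrightarrow> w \<in> Tst" by (rule AE_mp) (rule AE_I2, auto simp: G0_def E_def)
      then show False using nfull by blast
    next
      case False
      then obtain y where y: "y \<in> K" "\<not> (AE w in P. w \<in> G0 \<longrightarrow> cov A XX y w)" by blast
      define G where "G = G0 \<inter> (space P - {w \<in> space P. cov A XX y w})"
      have Gs: "G \<in> sets P" unfolding G_def using G0s cov_sets[OF v] by blast
      have "AE w in P. w \<in> G \<longrightarrow> \<not> cov A XX y w" by (rule AE_I2) (simp add: G_def)
      moreover have "G \<subseteq> E" unfolding G_def G0_def by blast
      ultimately have "G \<in> TT" unfolding TT_def using Gs y(1) by blast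
      then have "AE w in P. w \<in> G \<longrightarrow> w \<in> Tst" using Tst(2) by blast
      then have "AE w in P. w \<in> G0 \<longrightarrow> cov A XX y w"
        by (rule AE_mp) (rule AE_I2, auto simp: G_def G0_def E_def)
      then show False using y(2) by blast
    qed
  qed
  have "AE w in P. w \<in> E \<longrightarrow> \<not> cov A XX yst w" using full yst(2) by eventually_elim blast
  then show ?thesis using yst(1) unfolding E_def by blast
qed

end


context SKW begin

theorem cover: "\<exists>A XX. valid A XX \<and> (\<forall>y\<in>K. AE w in P. cov A XX y w)"
proof -
  obtain x0 where x0: "x0 \<in> K" using stable_set_ne[OF K_stable] by blast
  have v0: "valid (part2 P (space P)) (\<lambda>k. {x0})" by (rule valid0[OF x0])
  have "\<exists>S\<in>S1. \<forall>T\<in>S1. AE w in P. w \<in> T \<longrightarrow> w \<in> S"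
  proof (rule exhaust)
    show "S1 \<subseteq> sets P" unfolding S1_def by blast
    have "{} \<in> S1" unfolding S1_def using v0 by (auto intro: AE_I2)
    then show "S1 \<noteq> {}" by blast
    fix S :: "nat \<Rightarrow> 'w set" assume "\<And>n. S n \<in> S1"
    then show "(\<Union>n. S n) \<in> S1" by (rule S1_union)
  qed
  then obtain Sst where Sst: "Sst \<in> S1" "\<forall>T\<in>S1. AE w in P. w \<in> T \<longrightarrow> w \<in> Sst" by blast
  have Ssts: "Sst \<in> sets P" using Sst(1) unfolding S1_def by blast
  obtain A1 XX1 where A1: "valid A1 XX1" "\<forall>y\<in>K. AE w in P. w \<in> Sst \<longrightarrow> cov A1 XX1 y w"
    using Sst(1) unfolding S1_def by blast
  have full: "AE w in P. w \<in> Sst"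
  proof (rule ccontr)
    assume nfull: "\<not> (AE w in P. w \<in> Sst)"
    define E where "E = space P - Sst"
    have Esub: "E \<subseteq> space P" unfolding E_def by blast
    define Zb where "Zb = {ZZ E A XX | A XX. valid A XX}"
    have Zne: "ZZ E A XX \<noteq> {}" if v: "valid A XX" for A XX
      using Z_nonempty[OF Ssts Sst(2) v x0] unfolding ZZ_def E_def by blast
    have ZK: "ZZ E A XX \<subseteq> K" for A XX unfolding ZZ_def by blast
    define FF where "FF = {U. U \<subseteq> K \<and> (\<exists>Z\<in>Zb. Z \<subseteq> U)}"
    have filt: "stable_filter P smul K FF"
      unfolding stable_filter_def
    proof (intro conjI)
      show "filter_on K FF" unfolding filter_on_def
      proof (intro conjI ballI allI impI)
        show "FF \<subseteq> Pow K" unfolding FF_def by blast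
        show "K \<in> FF" unfolding FF_def Zb_def using v0 ZK by blast
        show "{} \<notin> FF" unfolding FF_def Zb_def using Zne by blast
        show "V \<in> FF" if "U \<in> FF" "U \<subseteq> V \<and> V \<subseteq> K" for U V using that unfolding FF_def by blast
        show "U \<inter> V \<in> FF" if uv: "U \<in> FF" "V \<in> FF" for U V
        proof -
          obtain A XX A' XX' where a: "valid A XX" "valid A' XX'" "ZZ E A XX \<subseteq> U" "ZZ E A' XX' \<subseteq> V"
            "U \<subseteq> K" using uv unfolding FF_def Zb_def by blast
          obtain A'' XX'' where "valid A'' XX''" "ZZ E A'' XX'' \<subseteq> ZZ E A XX \<inter> ZZ E A' XX'"
            using Z_int[OF a(1) a(2)] by blast
          then show ?thesis unfolding FF_def Zb_def using a by blast
        qed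
      qed
      show "\<exists>B\<subseteq>FF. (\<forall>U\<in>FF. \<exists>V\<in>B. V \<subseteq> U) \<and> stable_coll P smul B"
      proof (intro exI[of _ Zb] conjI)
        show "Zb \<subseteq> FF" unfolding FF_def Zb_def using ZK by blast
        show "\<forall>U\<in>FF. \<exists>V\<in>Zb. V \<subseteq> U" unfolding FF_def by blast
        show "stable_coll P smul Zb" unfolding stable_coll_def
        proof (intro conjI ballI allI impI)
          show "Zb \<noteq> {}" unfolding Zb_def using v0 by blast
          fix S assume "S \<in> Zb"
          then obtain A XX where v: "valid A XX" and Sd: "S = ZZ E A XX" unfolding Zb_def by blast
          show "stable_set P smul S" unfolding stable_set_def Sd
          proof (intro conjI allI impI)
            show "ZZ E A XX \<noteq> {}" by (rule Zne[OF v])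
            fix D :: "nat \<Rightarrow> 'w set" and ys :: "nat \<Rightarrow> 'e" assume "l0_partition P D \<and> (\<forall>k. ys k \<in> ZZ E A XX)"
            then show "mcc smul D ys \<in> ZZ E A XX" using Z_mcc[OF v] by blast
          qed
        next
          fix D :: "nat \<Rightarrow> 'w set" and Ys :: "nat \<Rightarrow> 'e set"
          assume a: "l0_partition P D \<and> (\<forall>k. Ys k \<in> Zb)"
          then have D: "l0_partition P D" by blast
          have "\<forall>k. \<exists>p. valid (fst p) (snd p) \<and> Ys k = ZZ E (fst p) (snd p)"
          proof
            fix k
            obtain A XX where "valid A XX" "Ys k = ZZ E A XX" using a unfolding Zb_def by blast
            then show "\<exists>p. valid (fst p) (snd p) \<and> Ys k = ZZ E (fst p) (snd p)"
              by (intro exI[of _ "(A, XX)"]) simp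
          qed
          then obtain p where p: "\<forall>k. valid (fst (p k)) (snd (p k)) \<and> Ys k = ZZ E (fst (p k)) (snd (p k))"
            by (rule choice[THEN exE])
          define AA where "AA = (\<lambda>k. fst (p k))"
          define XXn where "XXn = (\<lambda>k. snd (p k))"
          have v: "valid (AA k) (XXn k)" for k unfolding AA_def XXn_def using p by blast
          have Ysd: "Ys = (\<lambda>k. ZZ E (AA k) (XXn k))" unfolding AA_def XXn_def using p by blast
          have "cc_sets smul D Ys = ZZ E (refine D AA) (rX XXn)"
            unfolding Ysd by (rule Z_cc[of D AA XXn, OF D v Zne[OF v] Esub])
          moreover have "valid (refine D AA) (rX XXn)" by (rule valid_refine[of D AA XXn, OF D v])
          ultimately show "cc_sets smul D Ys \<in> Zb" unfolding Zb_def by blast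
        qed
      qed
    qed
    obtain z where z: "z \<in> K" "\<forall>U\<in>FF. z \<in> X closure_of U"
      using cpt filt unfolding stable_compact_def by blast
    define Z0 where "Z0 = ZZ E (part2 P (space P)) (\<lambda>k. {z})"
    have vz: "valid (part2 P (space P)) (\<lambda>k. {z})" by (rule valid0[OF z(1)])
    have "Z0 \<in> FF" unfolding FF_def Zb_def Z0_def using vz ZK by blast
    then have "z \<in> X closure_of Z0" using z(2) by blast
    then obtain y where y: "y \<in> Z0" "y \<in> W z"
      unfolding in_closure_of using W_open[OF z(1)] Wx[OF z(1)] by blast
    have c1: "AE w in P. w \<in> cv z y" by (rule cv_full[OF z(1) y(2)])
    have c2: "AE w in P. w \<in> E \<longrightarrow> \<not> cov (part2 P (space P)) (\<lambda>k. {z}) y w"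
      using y(1) unfolding Z0_def ZZ_def by blast
    have "AE w in P. w \<in> Sst" using c1 c2 AE_space
    proof eventually_elim
      case (elim w)
      have "cov (part2 P (space P)) (\<lambda>k. {z}) y w" unfolding cov_def
        by (rule exI[of _ 0]) (use elim in \<open>simp add: part2_def\<close>)
      then show ?case using elim unfolding E_def by blast
    qed
    then show False using nfull by blast
  qed
  have "\<forall>y\<in>K. AE w in P. cov A1 XX1 y w"
  proof
    fix y assume "y \<in> K"
    then have "AE w in P. w \<in> Sst \<longrightarrow> cov A1 XX1 y w" using A1(2) by blast
    then show "AE w in P. cov A1 XX1 y w" using full by eventually_elim blast
  qed
  then show ?thesis using A1(1) by blast
qed

end


lemma floor_set_meas:
  fixes g :: "'a \<Rightarrow> real" assumes [measurable]: "g \<in> borel_measurable M"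
  shows "{w \<in> space M. \<lfloor>g w * q\<rfloor> = (c::int)} \<in> sets M"
  unfolding floor_eq_iff by measurable

lemma floor_close: "\<lfloor>(p::real)\<rfloor> = \<lfloor>q\<rfloor> \<Longrightarrow> \<bar>p - q\<bar> < 1"
proof -
  assume e: "\<lfloor>(p::real)\<rfloor> = \<lfloor>q\<rfloor>"
  have "real_of_int \<lfloor>p\<rfloor> \<le> p" "p < real_of_int (\<lfloor>p\<rfloor> + 1)" using floor_correct[of p] by auto
  moreover have "real_of_int \<lfloor>q\<rfloor> \<le> q" "q < real_of_int (\<lfloor>q\<rfloor> + 1)" using floor_correct[of q] by auto
  ultimately show ?thesis using e by (simp add: abs_less_iff) linarith
qed

lemma floor_close_scaled:
  assumes "\<lfloor>(u::real) * real (Suc b)\<rfloor> = \<lfloor>v * real (Suc b)\<rfloor>"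
  shows "\<bar>u - v\<bar> < 1 / real (Suc b)"
proof -
  have "\<bar>u * real (Suc b) - v * real (Suc b)\<bar> < 1" using floor_close[OF assms] .
  then have "\<bar>u - v\<bar> * real (Suc b) < 1" by (simp add: abs_mult left_diff_distrib[symmetric])
  then show ?thesis by (simp add: field_simps)
qed

lemma floor_range:
  assumes "\<bar>u::real\<bar> < real (Suc a)"
  shows "\<lfloor>u * real (Suc b)\<rfloor> \<in> {- int (Suc a * Suc b) .. int (Suc a * Suc b)}"
proof -
  have "\<bar>u\<bar> * real (Suc b) < real (Suc a) * real (Suc b)"
    by (rule mult_strict_right_mono[OF assms]) simp
  moreover have "\<bar>u * real (Suc b)\<bar> = \<bar>u\<bar> * real (Suc b)" by (simp add: abs_mult)
  moreover have "real (Suc a * Suc b) = real (Suc a) * real (Suc b)" by (simp only: of_nat_mult)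
  ultimately have "\<bar>u * real (Suc b)\<bar> < real (Suc a * Suc b)" by simp
  then have h: "- real (Suc a * Suc b) < u * real (Suc b)" "u * real (Suc b) < real (Suc a * Suc b)"
    unfolding abs_less_iff by auto
  have "- int (Suc a * Suc b) \<le> \<lfloor>u * real (Suc b)\<rfloor>" unfolding le_floor_iff using h(1) by simp
  moreover have "\<lfloor>u * real (Suc b)\<rfloor> \<le> int (Suc a * Suc b)" unfolding floor_le_iff using h(2) by simp
  ultimately show ?thesis by simp
qed

context SK begin

definition lev :: "('w \<Rightarrow> real) \<Rightarrow> nat \<Rightarrow> 'w set" where
  "lev g a = {w \<in> space P. real a \<le> g w \<and> g w < real a + 1}"

lemma lev_partition:
  assumes g: "g \<in> borel_measurable P" and pos: "\<And>w. w \<in> space P \<Longrightarrow> 0 \<le> g w"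
  shows "l0_partition P (lev g)"
  unfolding l0_partition_def
proof (intro conjI)
  have [measurable]: "g \<in> borel_measurable P" using g .
  show "\<forall>k. lev g k \<in> sets P" unfolding lev_def by (intro allI) measurable
  show "disjoint_family (lev g)" unfolding disjoint_family_on_def lev_def
  proof (intro ballI impI)
    fix a b :: nat assume "a \<noteq> b"
    show "{w \<in> space P. real a \<le> g w \<and> g w < real a + 1} \<inter> {w \<in> space P. real b \<le> g w \<and> g w < real b + 1} = {}"
    proof (rule ccontr)
      assume "\<not> ?thesis"
      then obtain w where "real a \<le> g w" "g w < real a + 1" "real b \<le> g w" "g w < real b + 1" by blast
      then have "real a < real b + 1" "real b < real a + 1" by linarith+
      then show False using \<open>a \<noteq> b\<close> by linarith
    qed
  qed
  show "(\<Union>k. lev g k) = space P"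
  proof
    show "(\<Union>k. lev g k) \<subseteq> space P" unfolding lev_def by blast
    show "space P \<subseteq> (\<Union>k. lev g k)"
    proof
      fix w assume w: "w \<in> space P"
      have "real (nat \<lfloor>g w\<rfloor>) \<le> g w" "g w < real (nat \<lfloor>g w\<rfloor>) + 1"
        using pos[OF w] by (auto simp: of_nat_nat)
      then show "w \<in> (\<Union>k. lev g k)" unfolding lev_def using w by blast
    qed
  qed
qed

lemma cell_rep:
  assumes XS: "finite XS" "XS \<subseteq> K"
  shows "\<exists>H\<in>F. \<forall>f\<in>F. AE w in P. (\<forall>x\<in>XS. \<lfloor>f x w * q\<rfloor> = c x) \<longrightarrow> (\<forall>x\<in>XS. \<lfloor>H x w * q\<rfloor> = c x)"
proof -
  define Fm where "Fm = {S \<in> sets P. \<exists>h\<in>F. AE w in P. w \<in> S \<longrightarrow> (\<forall>x\<in>XS. \<lfloor>h x w * q\<rfloor> = c x)}"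
  have "\<exists>S\<in>Fm. \<forall>T\<in>Fm. AE w in P. w \<in> T \<longrightarrow> w \<in> S"
  proof (rule exhaust)
    show "Fm \<subseteq> sets P" unfolding Fm_def by blast
    obtain h0 where "h0 \<in> F" using F_ne by blast
    then have "{} \<in> Fm" unfolding Fm_def by (auto intro: AE_I2)
    then show "Fm \<noteq> {}" by blast
    fix S :: "nat \<Rightarrow> 'w set" assume S: "\<And>n. S n \<in> Fm"
    have Ss: "S n \<in> sets P" for n using S unfolding Fm_def by blast
    have "\<forall>n. \<exists>h. h \<in> F \<and> (AE w in P. w \<in> S n \<longrightarrow> (\<forall>x\<in>XS. \<lfloor>h x w * q\<rfloor> = c x))"
      using S unfolding Fm_def by blast
    then obtain hs where hs0: "\<forall>n. hs n \<in> F \<and> (AE w in P. w \<in> S n \<longrightarrow> (\<forall>x\<in>XS. \<lfloor>hs n x w * q\<rfloor> = c x))"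
      by (rule choice[THEN exE])
    have hsF: "\<And>n. hs n \<in> F" using hs0 by blast
    obtain g where g: "g \<in> F" "\<forall>x\<in>K. \<forall>n. AE w in P. w \<in> disjointed S n \<longrightarrow> g x w = hs n x w"
      using F_glue[where T=S and fs=hs, OF Ss hsF] by blast
    have "AE w in P. \<forall>n. (\<forall>x\<in>XS. w \<in> disjointed S n \<longrightarrow> g x w = hs n x w) \<and>
                         (w \<in> S n \<longrightarrow> (\<forall>x\<in>XS. \<lfloor>hs n x w * q\<rfloor> = c x))"
      unfolding AE_all_countable
    proof
      fix n
      have "AE w in P. \<forall>x\<in>XS. w \<in> disjointed S n \<longrightarrow> g x w = hs n x w"
        by (rule AE_finite_allI[OF XS(1)]) (use g(2) XS(2) in blast)
      moreover have "AE w in P. w \<in> S n \<longrightarrow> (\<forall>x\<in>XS. \<lfloor>hs n x w * q\<rfloor> = c x)" using hs0 by blast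
      ultimately show "AE w in P. (\<forall>x\<in>XS. w \<in> disjointed S n \<longrightarrow> g x w = hs n x w) \<and>
                         (w \<in> S n \<longrightarrow> (\<forall>x\<in>XS. \<lfloor>hs n x w * q\<rfloor> = c x))" by eventually_elim blast
    qed
    then have "AE w in P. w \<in> (\<Union>n. S n) \<longrightarrow> (\<forall>x\<in>XS. \<lfloor>g x w * q\<rfloor> = c x)"
    proof (rule AE_mp, intro AE_I2 impI)
      fix w assume h: "\<forall>n. (\<forall>x\<in>XS. w \<in> disjointed S n \<longrightarrow> g x w = hs n x w) \<and>
                         (w \<in> S n \<longrightarrow> (\<forall>x\<in>XS. \<lfloor>hs n x w * q\<rfloor> = c x))" and w: "w \<in> (\<Union>n. S n)"
      have "w \<in> (\<Union>n. disjointed S n)" using w by (simp add: UN_disjointed_eq)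
      then obtain n where wn: "w \<in> disjointed S n" by blast
      then have "w \<in> S n" using disjointed_subset[of S n] by blast
      then show "\<forall>x\<in>XS. \<lfloor>g x w * q\<rfloor> = c x" using h wn by auto
    qed
    moreover have "(\<Union>n. S n) \<in> sets P" using Ss by blast
    ultimately show "(\<Union>n. S n) \<in> Fm" unfolding Fm_def using g(1) by blast
  qed
  then obtain Occ where Occ: "Occ \<in> Fm" "\<forall>T\<in>Fm. AE w in P. w \<in> T \<longrightarrow> w \<in> Occ" by blast
  obtain H where H: "H \<in> F" "AE w in P. w \<in> Occ \<longrightarrow> (\<forall>x\<in>XS. \<lfloor>H x w * q\<rfloor> = c x)"
    using Occ(1) unfolding Fm_def by blast
  have "\<forall>f\<in>F. AE w in P. (\<forall>x\<in>XS. \<lfloor>f x w * q\<rfloor> = c x) \<longrightarrow> (\<forall>x\<in>XS. \<lfloor>H x w * q\<rfloor> = c x)"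
  proof
    fix f assume f: "f \<in> F"
    define Sf where "Sf = {w \<in> space P. \<forall>x\<in>XS. \<lfloor>f x w * q\<rfloor> = c x}"
    have "Sf = space P \<inter> (\<Inter>x\<in>XS. {w \<in> space P. \<lfloor>f x w * q\<rfloor> = c x})" unfolding Sf_def by blast
    moreover have "(\<Inter>x\<in>XS. {w \<in> space P. \<lfloor>f x w * q\<rfloor> = c x}) \<in> sets P" if "XS \<noteq> {}"
      by (rule sets.finite_INT[OF XS(1) that]) (use floor_set_meas F_meas[OF f] XS(2) in blast)
    ultimately have Sfs: "Sf \<in> sets P" by (cases "XS = {}") auto
    have "Sf \<in> Fm" unfolding Fm_def using Sfs f by (auto simp: Sf_def intro!: AE_I2)
    then have "AE w in P. w \<in> Sf \<longrightarrow> w \<in> Occ" using Occ(2) by blast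
    then show "AE w in P. (\<forall>x\<in>XS. \<lfloor>f x w * q\<rfloor> = c x) \<longrightarrow> (\<forall>x\<in>XS. \<lfloor>H x w * q\<rfloor> = c x)"
      using H(2) AE_space by eventually_elim (auto simp: Sf_def)
  qed
  then show ?thesis using H(1) by blast
qed

end


context SK begin

lemma cellset_meas:
  assumes f: "f \<in> F" and XS: "finite XS" "XS \<subseteq> K"
  shows "{w \<in> space P. \<forall>x\<in>XS. \<lfloor>f x w * q\<rfloor> = c x} \<in> sets P"
proof -
  have "{w \<in> space P. \<forall>x\<in>XS. \<lfloor>f x w * q\<rfloor> = c x} = space P \<inter> (\<Inter>x\<in>XS. {w \<in> space P. \<lfloor>f x w * q\<rfloor> = c x})" by blast
  moreover have "(\<Inter>x\<in>XS. {w \<in> space P. \<lfloor>f x w * q\<rfloor> = c x}) \<in> sets P" if "XS \<noteq> {}"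
    by (rule sets.finite_INT[OF XS(1) that]) (use floor_set_meas F_meas[OF f] XS(2) in blast)
  ultimately show ?thesis by (cases "XS = {}") auto
qed

lemma QQ_at:
  "w \<in> refine A (\<lambda>k. refine (L k) (\<lambda>a. G)) m \<Longrightarrow>
   w \<in> A (fst (prod_decode m)) \<and> w \<in> L (fst (prod_decode m)) (fst (prod_decode (snd (prod_decode m))))
    \<and> w \<in> G (snd (prod_decode (snd (prod_decode m))))"
  unfolding refine_def by (auto split: prod.splits)

lemma net:
  assumes A: "l0_partition P A" and XX: "\<And>k. finite (XX k) \<and> XX k \<noteq> {} \<and> XX k \<subseteq> K"
    and pb: "pointwise_bounded P X F"
    and epsm: "eps \<in> borel_measurable P" and epsp: "\<And>w. 0 < eps w"
  shows "\<exists>N. stable_finite P F N \<and> (\<forall>f\<in>F. \<exists>g\<in>N. \<forall>k. \<forall>x\<in>XX k. AE w in P. w \<in> A k \<longrightarrow> \<bar>f x w - g x w\<bar> < eps w)"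
proof -
  have XXf: "finite (XX k)" and XXne: "XX k \<noteq> {}" and XXK: "XX k \<subseteq> K" for k using XX by auto
  obtain rho where rho: "\<forall>x\<in>K. rho x \<in> L0 P \<and> (\<forall>f\<in>F. leae P (\<lambda>w. \<bar>f x w\<bar>) (rho x))"
    using pb unfolding pointwise_bounded_def by (metis (no_types))
  define R where "R = (\<lambda>k w. Max ((\<lambda>x. \<bar>rho x w\<bar>) ` XX k))"
  have Rm: "R k \<in> borel_measurable P" for k unfolding R_def
  proof (rule borel_measurable_Max[OF XXf])
    fix x assume "x \<in> XX k"
    then have "rho x \<in> borel_measurable P" using rho XXK unfolding L0_def by blast
    then show "(\<lambda>w. \<bar>rho x w\<bar>) \<in> borel_measurable P" by measurable
  qed
  have Rge: "\<bar>rho x w\<bar> \<le> R k w" if "x \<in> XX k" for x k w unfolding R_def using XXf that by (intro Max_ge) auto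
  have Rpos: "0 \<le> R k w" for k w
  proof -
    obtain x where "x \<in> XX k" using XXne by blast
    then show ?thesis using Rge[of x k w] by linarith
  qed
  define ginv where "ginv = (\<lambda>w. 1 / eps w)"
  have gm: "ginv \<in> borel_measurable P" unfolding ginv_def using epsm by measurable
  have gpos: "0 \<le> ginv w" for w unfolding ginv_def using epsp[of w] by simp
  define QQ where "QQ = refine A (\<lambda>k. refine (lev (R k)) (\<lambda>a. lev ginv))"
  have QQp: "l0_partition P QQ" unfolding QQ_def
    by (intro refine_partition[OF A] refine_partition lev_partition Rm gm Rpos gpos)
  define kk where "kk = (\<lambda>m::nat. fst (prod_decode m))"
  define aa where "aa = (\<lambda>m::nat. fst (prod_decode (snd (prod_decode m))))"
  define bb where "bb = (\<lambda>m::nat. snd (prod_decode (snd (prod_decode m))))"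
  have QQ_at': "w \<in> A (kk m) \<and> w \<in> lev (R (kk m)) (aa m) \<and> w \<in> lev ginv (bb m)" if "w \<in> QQ m" for w m
    using QQ_at[of w A "\<lambda>k. lev (R k)" "lev ginv" m] that unfolding QQ_def kk_def aa_def bb_def by blast
  define CC where "CC = (\<lambda>m. PiE (XX (kk m)) (\<lambda>_. {- int (Suc (aa m) * Suc (bb m)) .. int (Suc (aa m) * Suc (bb m))}))"
  have CCf: "finite (CC m)" for m unfolding CC_def by (intro finite_PiE XXf) auto
  have CCne: "CC m \<noteq> {}" for m unfolding CC_def by (simp add: PiE_eq_empty_iff)
  define Hc where "Hc = (\<lambda>m c. SOME H. H \<in> F \<and> (\<forall>f\<in>F. AE w in P. (\<forall>x\<in>XX (kk m). \<lfloor>f x w * real (Suc (bb m))\<rfloor> = c x)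
      \<longrightarrow> (\<forall>x\<in>XX (kk m). \<lfloor>H x w * real (Suc (bb m))\<rfloor> = c x)))"
  have Hc: "Hc m c \<in> F \<and> (\<forall>f\<in>F. AE w in P. (\<forall>x\<in>XX (kk m). \<lfloor>f x w * real (Suc (bb m))\<rfloor> = c x)
      \<longrightarrow> (\<forall>x\<in>XX (kk m). \<lfloor>Hc m c x w * real (Suc (bb m))\<rfloor> = c x))" for m c
  proof -
    let ?Q = "\<lambda>H. H \<in> F \<and> (\<forall>f\<in>F. AE w in P. (\<forall>x\<in>XX (kk m). \<lfloor>f x w * real (Suc (bb m))\<rfloor> = c x)
      \<longrightarrow> (\<forall>x\<in>XX (kk m). \<lfloor>H x w * real (Suc (bb m))\<rfloor> = c x))"
    have "\<exists>H. ?Q H" using cell_rep[where q="real (Suc (bb m))" and c=c, OF XXf XXK] by blast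
    then have "?Q (SOME H. ?Q H)" by (rule someI_ex)
    then show ?thesis unfolding Hc_def .
  qed
  define Y where "Y = (\<lambda>m. Hc m ` CC m)"
  define N where "N = {fcc QQ ys | ys. \<forall>m. ys m \<in> stF P (Y m)}"
  have SF: "stable_finite P F N" unfolding stable_finite_def
  proof (intro exI[of _ QQ] exI[of _ Y] conjI allI)
    show "l0_partition P QQ" by (rule QQp)
    show "finite (Y m)" for m unfolding Y_def using CCf by blast
    show "Y m \<noteq> {}" for m unfolding Y_def using CCne by blast
    show "Y m \<subseteq> F" for m unfolding Y_def using Hc by blast
    show "N = {fcc QQ ys |ys. \<forall>k. ys k \<in> stF P (Y k)}" unfolding N_def ..
  qed
  have approx: "\<exists>g\<in>N. \<forall>k. \<forall>x\<in>XX k. AE w in P. w \<in> A k \<longrightarrow> \<bar>f x w - g x w\<bar> < eps w" if f: "f \<in> F" for f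
  proof -
    define q where "q = (\<lambda>m. real (Suc (bb m)))"
    have "\<forall>m. \<exists>cs. set cs = CC m \<and> distinct cs" using CCf finite_distinct_list by blast
    then obtain cs where cs: "\<forall>m. set (cs m) = CC m \<and> distinct (cs m)" by (rule choice[THEN exE])
    have csne: "0 < length (cs m)" for m
    proof -
      have "set (cs m) \<noteq> {}" using cs CCne[of m] by simp
      then show ?thesis by simp
    qed
    define S where "S = (\<lambda>m i. {w \<in> space P. \<forall>x\<in>XX (kk m). \<lfloor>f x w * q m\<rfloor> = (cs m ! i) x})"
    have Ss: "S m i \<in> sets P" for m i unfolding S_def by (rule cellset_meas[OF f XXf XXK])
    define B where "B = (\<lambda>m j. if j < length (cs m) then S m j
                           else if j = length (cs m) then space P - (\<Union>i<length (cs m). S m i) else {})"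
    have Bp: "l0_partition P (B m)" for m
    proof -
      have U: "(\<Union>i<length (cs m). S m i) \<in> sets P" by (rule sets.finite_UN) (auto simp: Ss)
      show ?thesis unfolding l0_partition_def
      proof (intro conjI allI)
        show "B m j \<in> sets P" for j unfolding B_def using Ss U by auto
        show "disjoint_family (B m)" unfolding disjoint_family_on_def
        proof (intro ballI impI)
          fix i j :: nat assume ij: "i \<noteq> j"
          show "B m i \<inter> B m j = {}"
          proof (rule ccontr)
            assume "B m i \<inter> B m j \<noteq> {}"
            then obtain w where wi: "w \<in> B m i" and wj: "w \<in> B m j" by blast
            consider (a) "i < length (cs m)" "j < length (cs m)" | (b) "i < length (cs m)" "\<not> j < length (cs m)"
              | (c) "\<not> i < length (cs m)" "j < length (cs m)" | (d) "\<not> i < length (cs m)" "\<not> j < length (cs m)" by blast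
            then show False
            proof cases
              case a
              then have "\<forall>x\<in>XX (kk m). (cs m ! i) x = (cs m ! j) x" using wi wj unfolding B_def S_def by auto
              moreover have "cs m ! i \<in> CC m" "cs m ! j \<in> CC m" using a cs nth_mem by blast+
              ultimately have "cs m ! i = cs m ! j" unfolding CC_def by (auto intro: PiE_ext)
              then show False using a ij cs nth_eq_iff_index_eq by blast
            next
              case b then show False using wi wj unfolding B_def by (auto split: if_splits)
            next
              case c then show False using wi wj unfolding B_def by (auto split: if_splits)
            next
              case d then show False using wi wj ij unfolding B_def by (auto split: if_splits)
            qed
          qed
        qed
        show "(\<Union>j. B m j) = space P"
        proof
          show "(\<Union>j. B m j) \<subseteq> space P" unfolding B_def S_def by (auto split: if_splits)
          show "space P \<subseteq> (\<Union>j. B m j)"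
          proof
            fix w assume w: "w \<in> space P"
            show "w \<in> (\<Union>j. B m j)"
            proof (cases "\<exists>i<length (cs m). w \<in> S m i")
              case True
              then obtain i where "i < length (cs m)" "w \<in> S m i" by blast
              then show ?thesis unfolding B_def by (intro UN_I[of i]) auto
            next
              case False
              then show ?thesis unfolding B_def using w by (intro UN_I[of "length (cs m)"]) auto
            qed
          qed
        qed
      qed
    qed
    define zs where "zs = (\<lambda>m j. Hc m (cs m ! (if j < length (cs m) then j else 0)))"
    have zsY: "zs m j \<in> Y m" for m j
    proof -
      have "(if j < length (cs m) then j else 0) < length (cs m)" using csne[of m] by auto
      then have "cs m ! (if j < length (cs m) then j else 0) \<in> CC m" using cs nth_mem by blast
      then show ?thesis unfolding zs_def Y_def by blast
    qed
    define ys where "ys = (\<lambda>m. fcc (B m) (zs m))"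
    have ysY: "ys m \<in> stF P (Y m)" for m unfolding stF_def ys_def using Bp zsY by blast
    define g where "g = fcc QQ ys"
    have gN: "g \<in> N" unfolding N_def g_def using ysY by blast
    have "\<forall>k. \<forall>x\<in>XX k. AE w in P. w \<in> A k \<longrightarrow> \<bar>f x w - g x w\<bar> < eps w"
    proof (intro allI ballI)
      fix k x assume x: "x \<in> XX k"
      have F1: "AE w in P. \<forall>x'\<in>XX k. \<bar>f x' w\<bar> \<le> rho x' w"
      proof (rule AE_finite_allI[OF XXf])
        fix x' assume "x' \<in> XX k"
        then show "AE w in P. \<bar>f x' w\<bar> \<le> rho x' w" using rho f XXK unfolding leae_def by blast
      qed
      have F2: "AE w in P. \<forall>m j. j < length (cs m) \<longrightarrow> (\<forall>x'\<in>XX (kk m). \<lfloor>f x' w * q m\<rfloor> = (cs m ! j) x')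
          \<longrightarrow> (\<forall>x'\<in>XX (kk m). \<lfloor>Hc m (cs m ! j) x' w * q m\<rfloor> = (cs m ! j) x')"
        unfolding AE_all_countable
      proof (intro allI)
        fix m j
        have "AE w in P. (\<forall>x'\<in>XX (kk m). \<lfloor>f x' w * q m\<rfloor> = (cs m ! j) x')
          \<longrightarrow> (\<forall>x'\<in>XX (kk m). \<lfloor>Hc m (cs m ! j) x' w * q m\<rfloor> = (cs m ! j) x')"
          using Hc[of m "cs m ! j"] f unfolding q_def by blast
        then show "AE w in P. j < length (cs m) \<longrightarrow> (\<forall>x'\<in>XX (kk m). \<lfloor>f x' w * q m\<rfloor> = (cs m ! j) x')
          \<longrightarrow> (\<forall>x'\<in>XX (kk m). \<lfloor>Hc m (cs m ! j) x' w * q m\<rfloor> = (cs m ! j) x')" by eventually_elim blast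
      qed
      show "AE w in P. w \<in> A k \<longrightarrow> \<bar>f x w - g x w\<bar> < eps w"
        using F1 F2 AE_space
      proof eventually_elim
        case (elim w)
        show ?case
        proof
          assume wA: "w \<in> A k"
          obtain m where wm: "w \<in> QQ m" using partition_space[OF QQp] elim(3) by blast
          have qa: "w \<in> A (kk m)" "w \<in> lev (R (kk m)) (aa m)" "w \<in> lev ginv (bb m)" using QQ_at'[OF wm] by auto
          have km: "kk m = k" using partition_unique[OF A wA qa(1)] .
          have Rlt: "R k w < real (Suc (aa m))" using qa(2) km unfolding lev_def by auto
          have glt: "ginv w < real (Suc (bb m))" using qa(3) unfolding lev_def by auto
          define c0 where "c0 = restrict (\<lambda>x'. \<lfloor>f x' w * q m\<rfloor>) (XX k)"
          have "c0 \<in> CC m" unfolding CC_def km c0_def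
          proof (rule restrict_PiE_iff[THEN iffD2], intro ballI)
            fix x' assume x': "x' \<in> XX k"
            have "\<bar>f x' w\<bar> \<le> rho x' w" using elim(1) x' by blast
            also have "\<dots> \<le> \<bar>rho x' w\<bar>" by simp
            also have "\<dots> \<le> R k w" by (rule Rge[OF x'])
            finally have "\<bar>f x' w\<bar> < real (Suc (aa m))" using Rlt by linarith
            then show "\<lfloor>f x' w * q m\<rfloor> \<in> {- int (Suc (aa m) * Suc (bb m))..int (Suc (aa m) * Suc (bb m))}"
              unfolding q_def by (rule floor_range)
          qed
          then have "c0 \<in> set (cs m)" using cs by blast
          then obtain j where j: "j < length (cs m)" "cs m ! j = c0" by (metis in_set_conv_nth)
          have cell: "\<forall>x'\<in>XX (kk m). \<lfloor>f x' w * q m\<rfloor> = (cs m ! j) x'" unfolding j(2) c0_def km by simp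
          have wB: "w \<in> B m j" unfolding B_def S_def using j(1) cell elim(3) by simp
          have "g x w = ys m x w" unfolding g_def using fcc_at[OF QQp wm] .
          also have "\<dots> = zs m j x w" unfolding ys_def using fcc_at[OF Bp wB] .
          also have "\<dots> = Hc m (cs m ! j) x w" unfolding zs_def using j(1) by simp
          finally have gx: "g x w = Hc m (cs m ! j) x w" .
          have "\<lfloor>Hc m (cs m ! j) x w * q m\<rfloor> = (cs m ! j) x" using elim(2) j(1) cell x km by blast
          also have "\<dots> = \<lfloor>f x w * q m\<rfloor>" using cell x km by simp
          finally have "\<bar>f x w - Hc m (cs m ! j) x w\<bar> < 1 / real (Suc (bb m))"
            using floor_close_scaled[of "f x w" "bb m" "Hc m (cs m ! j) x w"] unfolding q_def by simp
          moreover have "1 / real (Suc (bb m)) < eps w"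
          proof -
            have e: "0 < eps w" by (rule epsp)
            have "1 / eps w < real (Suc (bb m))" using glt unfolding ginv_def .
            then have "1 < real (Suc (bb m)) * eps w" using e by (simp add: divide_less_eq)
            then show ?thesis by (simp add: divide_less_eq mult.commute)
          qed
          ultimately show "\<bar>f x w - g x w\<bar> < eps w" unfolding gx by linarith
        qed
      qed
    qed
    then show ?thesis using gN by blast
  qed

  show ?thesis using SF approx by blast
qed

end


context SK begin

lemma pbeq_imp_tb:
  assumes pb: "pointwise_bounded P X F" and eq: "stable_equicontinuous P X F"
  shows "stable_totally_bounded P X F"
  unfolding stable_totally_bounded_def
proof
  fix r assume r: "r \<in> L0pp P"
  define r' where "r' = (\<lambda>w. if 0 < r w then r w else 1)"
  have rm: "r \<in> borel_measurable P" using L0pp_L0[OF r] .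
  have r'm: "r' \<in> borel_measurable P" unfolding r'_def using rm by measurable
  have r'p: "0 < r' w" for w unfolding r'_def by auto
  have rr': "AE w in P. r' w = r w" using L0pp_pos[OF r] by eventually_elim (simp add: r'_def)
  define eps where "eps = (\<lambda>w. r' w / 3)"
  have epsm: "eps \<in> borel_measurable P" unfolding eps_def using r'm by measurable
  have epsp: "0 < eps w" for w unfolding eps_def using r'p[of w] by simp
  have epsL: "eps \<in> L0pp P" unfolding L0pp_def L0_def using epsm epsp by auto
  let ?Q = "\<lambda>x W0. W0 \<in> BB \<and> x \<in> W0 \<and> (\<forall>y\<in>W0. \<forall>f\<in>F. leae P (\<lambda>w. \<bar>f x w - f y w\<bar>) eps)"
  define W where "W = (\<lambda>x. SOME W0. ?Q x W0)"
  have Wp: "?Q x (W x)" if x: "x \<in> K" for x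
  proof -
    have "\<exists>V. (\<exists>U. openin X U \<and> x \<in> U \<and> U \<subseteq> V) \<and> V \<subseteq> K \<and>
        (\<forall>y\<in>V. \<forall>f\<in>F. leae P (\<lambda>w. \<bar>f x w - f y w\<bar>) eps)"
      using eq x epsL unfolding stable_equicontinuous_def by simp
    then obtain V U where VU: "openin X U" "x \<in> U" "U \<subseteq> V" "V \<subseteq> K"
      "\<forall>y\<in>V. \<forall>f\<in>F. leae P (\<lambda>w. \<bar>f x w - f y w\<bar>) eps"
      by (elim exE conjE) simp
    obtain W0 where "W0 \<in> BB" "x \<in> W0" "W0 \<subseteq> U" using BB_base[OF VU(1) VU(2)] by blast
    then have "?Q x W0" using VU by blast
    then have "\<exists>W0. ?Q x W0" by blast
    then have "?Q x (SOME W0. ?Q x W0)" by (rule someI_ex)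
    then show ?thesis unfolding W_def .
  qed
  interpret Wl: SKW P smul X F W
    by unfold_locales (use Wp in auto)
  obtain A XX where AX: "Wl.valid A XX" "\<forall>y\<in>K. AE w in P. Wl.cov A XX y w" using Wl.cover by blast
  have A: "l0_partition P A" and XX: "\<And>k. finite (XX k) \<and> XX k \<noteq> {} \<and> XX k \<subseteq> K"
    using AX(1) unfolding Wl.valid_def by auto
  obtain N where N: "stable_finite P F N"
    and app: "\<forall>f\<in>F. \<exists>g\<in>N. \<forall>k. \<forall>x\<in>XX k. AE w in P. w \<in> A k \<longrightarrow> \<bar>f x w - g x w\<bar> < eps w"
    using net[where A=A and XX=XX, OF A XX pb epsm epsp] by blast
  have ae: "\<forall>g\<in>N. \<exists>g'\<in>F. \<forall>x\<in>K. eqae P (g x) (g' x)"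
    using N_decomp[OF N] by (elim exE conjE) assumption
  have "\<forall>f\<in>F. \<exists>g\<in>N. ltae P (dinf P X f g) r"
  proof
    fix f assume f: "f \<in> F"
    obtain g where g: "g \<in> N" "\<forall>k. \<forall>x\<in>XX k. AE w in P. w \<in> A k \<longrightarrow> \<bar>f x w - g x w\<bar> < eps w"
      using app f by blast
    obtain g' where g': "g' \<in> F" "\<forall>x\<in>K. eqae P (g x) (g' x)" using ae g(1) by blast
    obtain y where y: "y \<in> K" "dinf P X f g = (\<lambda>w. \<bar>f y w - g y w\<bar>)"
      using dinf_max[OF f g'(1) g'(2)] by blast
    have "AE w in P. \<forall>k. \<forall>x\<in>XX k. w \<in> A k \<longrightarrow> w \<in> Wl.cv x y \<longrightarrow> \<bar>f y w - g y w\<bar> < r' w"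
      unfolding AE_all_countable
    proof
      fix k
      show "AE w in P. \<forall>x\<in>XX k. w \<in> A k \<longrightarrow> w \<in> Wl.cv x y \<longrightarrow> \<bar>f y w - g y w\<bar> < r' w"
      proof (rule AE_finite_allI)
        show "finite (XX k)" using XX by blast
        fix x assume x: "x \<in> XX k"
        have xK: "x \<in> K" using x XX by blast
        obtain u where u: "u \<in> W x" "loc (Wl.cv x y) y u" using Wl.cv_wit[OF xK] by blast
        have uK: "u \<in> K" using u(1) Wl.W_K[OF xK] by blast
        have cs: "Wl.cv x y \<in> sets P" by (rule Wl.cv_sets[OF xK])
        have a: "AE w in P. w \<in> A k \<longrightarrow> \<bar>f x w - g x w\<bar> < eps w" using g(2) x by blast
        have b: "AE w in P. w \<in> Wl.cv x y \<longrightarrow> f y w = f u w" by (rule F_loc[OF f y(1) uK cs u(2)])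
        have c: "AE w in P. w \<in> Wl.cv x y \<longrightarrow> g' y w = g' u w" by (rule F_loc[OF g'(1) y(1) uK cs u(2)])
        have d: "AE w in P. \<bar>f x w - f u w\<bar> \<le> eps w" using Wp[OF xK] u(1) f unfolding leae_def by blast
        have e: "AE w in P. \<bar>g' x w - g' u w\<bar> \<le> eps w" using Wp[OF xK] u(1) g'(1) unfolding leae_def by blast
        have f1: "AE w in P. g x w = g' x w" using g'(2) xK unfolding eqae_def by blast
        have f2: "AE w in P. g y w = g' y w" using g'(2) y(1) unfolding eqae_def by blast
        show "AE w in P. w \<in> A k \<longrightarrow> w \<in> Wl.cv x y \<longrightarrow> \<bar>f y w - g y w\<bar> < r' w"
          using a b c d e f1 f2
        proof eventually_elim
          case (elim w)
          show ?case
          proof (intro impI)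
            assume "w \<in> A k" "w \<in> Wl.cv x y"
            then have h: "\<bar>f x w - g x w\<bar> < eps w" "f y w = f u w" "g' y w = g' u w" using elim by auto
            have "\<bar>f y w - g y w\<bar> = \<bar>f u w - g' u w\<bar>" using h elim by simp
            also have "\<dots> \<le> \<bar>f x w - g' x w\<bar> + \<bar>f u w - f x w\<bar> + \<bar>g' u w - g' x w\<bar>" by (rule abs3)
            also have "\<dots> < r' w" using h elim unfolding eps_def by (simp add: abs_minus_commute)
            finally show "\<bar>f y w - g y w\<bar> < r' w" .
          qed
        qed
      qed
    qed
    then have "AE w in P. \<bar>f y w - g y w\<bar> < r w" using AX(2) y(1) rr'
    proof -
      assume h: "AE w in P. \<forall>k. \<forall>x\<in>XX k. w \<in> A k \<longrightarrow> w \<in> Wl.cv x y \<longrightarrow> \<bar>f y w - g y w\<bar> < r' w"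
      have cv: "AE w in P. Wl.cov A XX y w" using AX(2) y(1) by blast
      show ?thesis using h cv rr'
      proof eventually_elim
        case (elim w)
        then show ?case unfolding Wl.cov_def by force
      qed
    qed
    then have "ltae P (dinf P X f g) r" unfolding ltae_def y(2) by simp
    then show "\<exists>g\<in>N. ltae P (dinf P X f g) r" using g(1) by blast
  qed
  then show "\<exists>N. stable_finite P F N \<and> (\<forall>f\<in>F. \<exists>g\<in>N. ltae P (dinf P X f g) r)" using N by blast
qed

end

theorem theorem6:
  fixes P :: "'w measure"
    and smul :: "('w \<Rightarrow> real) \<Rightarrow> 'e::ab_group_add \<Rightarrow> 'e"
    and X :: "'e topology"
    and M :: "('e \<Rightarrow> 'w \<Rightarrow> real) set"
  assumes "prob_space P"
    and "stable_L0_module P smul"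
    and "stable_top_space P smul X"
    and "stable_compact P smul X"
    and "stable_subset_C P smul X M"
  shows "stable_totally_bounded P X M \<longleftrightarrow>
           (pointwise_bounded P X M \<and> stable_equicontinuous P X M)"
proof -
  interpret SK P smul X M
    using assms by (intro SK.intro SM.intro SK_axioms.intro SM_axioms.intro)
  show ?thesis using tb_imp_pb tb_imp_eq pbeq_imp_tb by blast
qed


end
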